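(* Let $\mathcal{A}$ be a finite-dimensional $C^*$-algebra, $\mathcal{A}^{\mathbb{Z}}$ the quasi-local algebra built from $\mathcal{A}$, and $\psi$ a stationary state on $\mathcal{A}^{\mathbb{Z}}$ with von Neumann entropy rate $s$. Let $(q_n)_{n\in\mathbb{N}}$ be orthogonal projections with $q_n\in\mathcal{A}^n$ and $\lim_{n\to\infty}\psi(q_n)=1$. Then $\lim_{n\to\infty}\frac1n S(q_nD_{\psi^n}q_n)=s$.
   Context: $\mathcal{A}^{\mathbb{Z}}$ is the norm completion of the union of $\mathcal{A}^{\Lambda}=\bigotimes_{i\in\Lambda}\mathcal{A}$ over finite $\Lambda\subset\mathbb{Z}$ with natural embeddings $a\mapsto a\otimes\mathbf{1}$; $\mathcal{A}^n:=\mathcal{A}^{[1,n]}$. The shift $T$ maps $\mathcal{A}^{\Lambda}$ onto $\mathcal{A}^{\Lambda+1}$; $\psi$ is stationary if $\psi\circ T=\psi$. $\psi^n$ is the restriction of $\psi$ to $\mathcal{A}^n$ and $D_{\psi^n}$ its density operator (w.r.t. the trace of $\mathcal{A}^n$ represented as matrices). $S(D)=-\mathrm{tr}(D\log D)$ (also for subnormalized positive $D$), and the entropy rate is $s=\lim_n\frac1nS(D_{\psi^n})$. *)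

theory Defs
  imports "Jordan_Normal_Form.Char_Poly" "HOL-Computational_Algebra.Polynomial"
begin

definition mtrace :: "complex mat \<Rightarrow> complex" where
  "mtrace M = (\<Sum>i<dim_row M. M $$ (i, i))"

definition cadj :: "complex mat \<Rightarrow> complex mat" where
  "cadj M = mat (dim_col M) (dim_row M) (\<lambda>(i, j). cnj (M $$ (j, i)))"

text \<open>Kronecker (tensor) product; the left factor carries the lower site indices.\<close>
definition kron :: "complex mat \<Rightarrow> complex mat \<Rightarrow> complex mat" where
  "kron A B = mat (dim_row A * dim_row B) (dim_col A * dim_col B)
     (\<lambda>(i, j). A $$ (i div dim_row B, j div dim_col B) * B $$ (i mod dim_row B, j mod dim_col B))"

text \<open>A finite-dimensional C*-algebra is (up to *-isomorphism) a direct sum of full matrix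
  algebras M_k1 + ... + M_km. We realise it as the algebra of all block-diagonal
  (sum ks) x (sum ks) complex matrices with diagonal blocks of sizes ks. The matrix trace
  then is the canonical trace (minimal projections have trace 1).\<close>

definition same_block :: "nat list \<Rightarrow> nat \<Rightarrow> nat \<Rightarrow> bool" where
  "same_block ks i j \<longleftrightarrow> (\<exists>b<length ks.
      sum_list (take b ks) \<le> i \<and> i < sum_list (take (Suc b) ks) \<and>
      sum_list (take b ks) \<le> j \<and> j < sum_list (take (Suc b) ks))"

definition blk_alg :: "nat list \<Rightarrow> complex mat set" where
  "blk_alg ks = {M \<in> carrier_mat (sum_list ks) (sum_list ks).
      \<forall>i<sum_list ks. \<forall>j<sum_list ks. \<not> same_block ks i j \<longrightarrow> M $$ (i, j) = 0}"

inductive_set lin_span :: "nat \<Rightarrow> complex mat set \<Rightarrow> complex mat set"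
  for n :: nat and S :: "complex mat set" where
  zero: "0\<^sub>m n n \<in> lin_span n S"
| gen: "x \<in> S \<Longrightarrow> x \<in> lin_span n S"
| add: "x \<in> lin_span n S \<Longrightarrow> y \<in> lin_span n S \<Longrightarrow> x + y \<in> lin_span n S"
| smult: "x \<in> lin_span n S \<Longrightarrow> c \<cdot>\<^sub>m x \<in> lin_span n S"

text \<open>A^n = A^{[1,n]}: the algebraic tensor product of n copies of A, i.e. the span of
  elementary tensors a_1 (x) ... (x) a_n, realised inside (d^n) x (d^n) matrices.\<close>
fun Apow :: "nat list \<Rightarrow> nat \<Rightarrow> complex mat set" where
  "Apow ks 0 = lin_span 1 {1\<^sub>m 1}"
| "Apow ks (Suc n) = lin_span (sum_list ks ^ Suc n)
      {kron X a | X a. X \<in> Apow ks n \<and> a \<in> blk_alg ks}"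

text \<open>A stationary state psi on A^Z is determined by (and corresponds bijectively to)
  the family of its restrictions phi n = psi restricted to A^{[1,n]}, which are states,
  consistent (phi (n+1) (X (x) 1) = phi n X) and shift-invariant
  (phi (n+1) (1 (x) X) = phi n X).\<close>
definition stationary_state :: "nat list \<Rightarrow> (nat \<Rightarrow> complex mat \<Rightarrow> complex) \<Rightarrow> bool" where
  "stationary_state ks phi \<longleftrightarrow>
     (\<forall>n. \<forall>X\<in>Apow ks n. \<forall>Y\<in>Apow ks n. phi n (X + Y) = phi n X + phi n Y) \<and>
     (\<forall>n. \<forall>X\<in>Apow ks n. \<forall>c. phi n (c \<cdot>\<^sub>m X) = c * phi n X) \<and>
     (\<forall>n. \<forall>X\<in>Apow ks n. Im (phi n (cadj X * X)) = 0 \<and> Re (phi n (cadj X * X)) \<ge> 0) \<and>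
     (\<forall>n. phi n (1\<^sub>m (sum_list ks ^ n)) = 1) \<and>
     (\<forall>n. \<forall>X\<in>Apow ks n. phi (Suc n) (kron X (1\<^sub>m (sum_list ks))) = phi n X) \<and>
     (\<forall>n. \<forall>X\<in>Apow ks n. phi (Suc n) (kron (1\<^sub>m (sum_list ks)) X) = phi n X)"

definition density :: "nat list \<Rightarrow> (nat \<Rightarrow> complex mat \<Rightarrow> complex) \<Rightarrow> nat \<Rightarrow> complex mat" where
  "density ks phi n = (THE D. D \<in> Apow ks n \<and> (\<forall>a\<in>Apow ks n. phi n a = mtrace (D * a)))"

definition eta :: "real \<Rightarrow> real" where
  "eta x = (if x \<le> 0 then 0 else - x * ln x)"

text \<open>S(D) = - tr (D log D) = sum over the eigenvalues (with multiplicity) of -lambda ln lambda,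
  for positive (possibly subnormalised) D, with 0 ln 0 = 0.\<close>
definition vN_entropy :: "complex mat \<Rightarrow> real" where
  "vN_entropy D = (\<Sum>\<^sub># (image_mset (\<lambda>z. eta (Re z)) (proots (char_poly D))))"

definition orth_proj :: "complex mat \<Rightarrow> bool" where
  "orth_proj q \<longleftrightarrow> q * q = q \<and> cadj q = q"

end

theory Submission
  imports Defs "Jordan_Normal_Form.Schur_Decomposition"
begin

lemma eta_nonneg: "0 \<le> x \<Longrightarrow> x \<le> 1 \<Longrightarrow> 0 \<le> eta x"
  unfolding eta_def by (auto simp: mult_nonneg_nonpos ln_le_zero_iff)

lemma eta_zero[simp]: "eta 0 = 0" unfolding eta_def by simp

lemma eta_tangent:
  assumes x: "x > 0" and y: "y \<ge> 0"
  shows "eta y \<le> eta x - (ln x + 1) * (y - x)"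
proof (cases "y = 0")
  case True thus ?thesis using x by (simp add: eta_def algebra_simps)
next
  case False
  hence y': "y > 0" using y by simp
  have "ln (x / y) \<le> x / y - 1" using x y' by (intro ln_le_minus_one) auto
  hence "y * ln (x / y) \<le> y * (x / y - 1)" using y' by (intro mult_left_mono) auto
  hence "y * (ln x - ln y) \<le> x - y" using x y' by (simp add: ln_div right_diff_distrib)
  thus ?thesis using x y' by (simp add: eta_def algebra_simps)
qed

lemma eta_jensen:
  assumes fin: "finite I" and w: "\<And>i. i \<in> I \<Longrightarrow> w i \<ge> 0" and ws: "sum w I \<le> 1"
    and xs: "\<And>i. i \<in> I \<Longrightarrow> x i \<ge> 0"
  shows "(\<Sum>i\<in>I. w i * eta (x i)) \<le> eta (\<Sum>i\<in>I. w i * x i)"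
proof -
  define m where "m = (\<Sum>i\<in>I. w i * x i)"
  have m0: "m \<ge> 0" unfolding m_def using w xs by (auto intro: sum_nonneg)
  show ?thesis
  proof (cases "m = 0")
    case True
    have "\<forall>i\<in>I. w i * x i = 0"
      using True fin w xs unfolding m_def by (subst sum_nonneg_eq_0_iff[symmetric]) auto
    hence "\<forall>i\<in>I. w i * eta (x i) = 0" by auto
    hence "(\<Sum>i\<in>I. w i * eta (x i)) = 0" by (intro sum.neutral) auto
    thus ?thesis using True m_def by simp
  next
    case False
    hence mp: "m > 0" using m0 by simp
    have "(\<Sum>i\<in>I. w i * eta (x i)) \<le> (\<Sum>i\<in>I. w i * (eta m - (ln m + 1) * (x i - m)))"
      using eta_tangent[OF mp] w xs by (intro sum_mono mult_left_mono) auto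
    also have "\<dots> = (\<Sum>i\<in>I. w i * eta m - (ln m + 1) * (w i * x i) + (ln m + 1) * m * w i)"
      by (intro sum.cong) (auto simp: algebra_simps)
    also have "\<dots> = sum w I * eta m - (ln m + 1) * m + (ln m + 1) * m * sum w I"
      by (simp add: sum.distrib sum_subtractf sum_distrib_left[symmetric] sum_distrib_right[symmetric] m_def)
    also have "\<dots> = sum w I * eta m - (ln m + 1) * (m - sum w I * m)"
      by (simp add: algebra_simps)
    also have "\<dots> = eta m - (1 - sum w I) * m"
      using mp by (simp add: eta_def algebra_simps)
    also have "\<dots> \<le> eta m" using ws mp by simp
    finally show ?thesis unfolding m_def .
  qed
qed

lemma eta_mult: "0 \<le> x \<Longrightarrow> 0 \<le> y \<Longrightarrow> eta (x * y) = x * eta y + y * eta x"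
proof (cases "x = 0 \<or> y = 0")
  case False
  assume "0 \<le> x" "0 \<le> y"
  hence "x > 0" "y > 0" using False by auto
  moreover have "\<not> x * y \<le> 0" using calculation by (simp add: not_le)
  ultimately show ?thesis by (simp add: eta_def ln_mult algebra_simps)
qed (auto simp: eta_def)

lemma eta_le_one_minus: "0 \<le> c \<Longrightarrow> eta c \<le> 1 - c"
proof (cases "c = 0")
  case False
  assume c: "0 \<le> c"
  hence cp: "c > 0" using False by simp
  have "ln (1 / c) \<le> 1 / c - 1" using cp by (intro ln_le_minus_one) auto
  hence "c * ln (1 / c) \<le> c * (1 / c - 1)" using cp by (intro mult_left_mono) auto
  thus ?thesis using cp by (simp add: eta_def ln_div algebra_simps)
qed (simp)

lemma eta_uniform:
  assumes fin: "finite I" and N: "card I > 0" and t: "\<And>i. i \<in> I \<Longrightarrow> t i \<ge> 0"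
  shows "(\<Sum>i\<in>I. eta (t i)) \<le> card I * eta (sum t I / card I)"
proof -
  have "(\<Sum>i\<in>I. (1 / card I) * eta (t i)) \<le> eta (\<Sum>i\<in>I. (1 / card I) * t i)"
    using N t by (intro eta_jensen fin) auto
  hence "(\<Sum>i\<in>I. eta (t i)) / card I \<le> eta (sum t I / card I)"
    by (simp add: sum_distrib_left[symmetric] sum_divide_distrib[symmetric])
  thus ?thesis using N by (simp add: field_simps)
qed

lemma eta_scale: "N > 0 \<Longrightarrow> t \<ge> 0 \<Longrightarrow> N * eta (t / N) = t * ln N + eta t"
proof (cases "t = 0")
  case False
  assume "N > 0" "t \<ge> 0"
  hence "t > 0" "N > 0" using False by auto
  moreover have "\<not> t / N \<le> 0" using calculation by (simp add: not_le)
  ultimately show ?thesis by (simp add: eta_def ln_div algebra_simps)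
qed (simp add: eta_def)

lemma eta_le_sqrt: "0 \<le> t \<Longrightarrow> eta t \<le> sqrt t"
proof -
  assume t0: "0 \<le> t"
  define v where "v = sqrt (sqrt t)"
  have v0: "v \<ge> 0" unfolding v_def using t0 by simp
  have vs: "sqrt t = v ^ 2" unfolding v_def using t0 by simp
  have "v ^ 4 = (v ^ 2) ^ 2" by simp
  hence vt: "t = v ^ 4" using vs t0 by (metis real_sqrt_pow2)
  show ?thesis
  proof (cases "v = 0")
    case True thus ?thesis using vt by simp
  next
    case False
    hence vp: "v > 0" using v0 by simp
    have "ln (1 / v) \<le> 1 / v - 1" using vp by (intro ln_le_minus_one) auto
    hence l: "- ln v \<le> 1 / v - 1" using vp by (simp add: ln_div)
    have "ln t = 4 * ln v" using vt vp by (simp add: ln_realpow)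
    hence "eta t = 4 * v ^ 4 * (- ln v)" using vt vp by (simp add: eta_def)
    also have "\<dots> \<le> 4 * v ^ 4 * (1 / v - 1)" using l vp by (intro mult_left_mono) auto
    also have "\<dots> = v ^ 2 - v ^ 2 * (2 * v - 1) ^ 2" using vp
      by (simp add: field_simps power2_eq_square power4_eq_xxxx)
    also have "\<dots> \<le> v ^ 2" by simp
    finally show ?thesis using vs by simp
  qed
qed

lemma mult_entry:
  assumes "A \<in> carrier_mat n m" "B \<in> carrier_mat m k" "i < n" "j < k"
  shows "(A * B) $$ (i, j) = (\<Sum>l<m. A $$ (i, l) * B $$ (l, j))"
  using assms by (auto simp: scalar_prod_def atLeast0LessThan intro!: sum.cong)

lemma cadj_carrier[simp]: "A \<in> carrier_mat n m \<Longrightarrow> cadj A \<in> carrier_mat m n"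
  unfolding cadj_def by auto

lemma cadj_dims[simp]: "dim_row (cadj A) = dim_col A" "dim_col (cadj A) = dim_row A"
  unfolding cadj_def by auto

lemma cadj_index[simp]: "i < dim_col A \<Longrightarrow> j < dim_row A \<Longrightarrow> cadj A $$ (i, j) = cnj (A $$ (j, i))"
  unfolding cadj_def by auto

lemma cadj_cadj[simp]: "cadj (cadj A) = A"
  by (rule eq_matI) auto

lemma cadj_mult:
  assumes A: "A \<in> carrier_mat n m" and B: "B \<in> carrier_mat m k"
  shows "cadj (A * B) = cadj B * cadj A"
proof (rule eq_matI)
  fix i j assume i: "i < dim_row (cadj B * cadj A)" and j: "j < dim_col (cadj B * cadj A)"
  hence i': "i < k" and j': "j < n" using A B by auto
  have "cadj (A * B) $$ (i, j) = cnj ((A * B) $$ (j, i))" using A B i' j' by auto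
  also have "\<dots> = (\<Sum>l<m. cnj (A $$ (j, l)) * cnj (B $$ (l, i)))"
    using mult_entry[OF A B j' i'] by simp
  also have "\<dots> = (\<Sum>l<m. cadj B $$ (i, l) * cadj A $$ (l, j))"
    using A B i' j' by (intro sum.cong) auto
  also have "\<dots> = (cadj B * cadj A) $$ (i, j)"
    by (rule mult_entry[symmetric]) (use A B i' j' in auto)
  finally show "cadj (A * B) $$ (i, j) = (cadj B * cadj A) $$ (i, j)" .
qed (use A B in auto)

lemma cadj_one[simp]: "cadj (1\<^sub>m n) = 1\<^sub>m n"
  by (rule eq_matI) auto

definition unitary :: "nat \<Rightarrow> complex mat \<Rightarrow> bool" where
  "unitary n U \<longleftrightarrow> U \<in> carrier_mat n n \<and> cadj U * U = 1\<^sub>m n \<and> U * cadj U = 1\<^sub>m n"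

lemma unitary_carrier: "unitary n U \<Longrightarrow> U \<in> carrier_mat n n"
  unfolding unitary_def by auto

lemma unitary_cancel:
  assumes U: "unitary n U" and X: "X \<in> carrier_mat n m"
  shows "U * (cadj U * X) = X" "cadj U * (U * X) = X"
proof -
  have Uc: "U \<in> carrier_mat n n" and UU: "cadj U * U = 1\<^sub>m n" "U * cadj U = 1\<^sub>m n"
    using U unfolding unitary_def by auto
  have "U * (cadj U * X) = (U * cadj U) * X" using Uc X by (subst assoc_mult_mat) auto
  thus "U * (cadj U * X) = X" using UU X by simp
  have "cadj U * (U * X) = (cadj U * U) * X" using Uc X by (subst assoc_mult_mat) auto
  thus "cadj U * (U * X) = X" using UU X by simp
qed

lemma unitary_mult:
  assumes U: "unitary n U" and V: "unitary n V"
  shows "unitary n (U * V)"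
proof -
  have Uc: "U \<in> carrier_mat n n" and Vc: "V \<in> carrier_mat n n"
    using U V unfolding unitary_def by auto
  have c: "cadj (U * V) = cadj V * cadj U" using Uc Vc by (rule cadj_mult)
  have "cadj V * cadj U * (U * V) = cadj V * (cadj U * (U * V))"
    using Uc Vc by (subst assoc_mult_mat) auto
  also have "\<dots> = cadj V * V" using unitary_cancel(2)[OF U Vc] by simp
  also have "\<dots> = 1\<^sub>m n" using V unfolding unitary_def by auto
  finally have 1: "cadj (U * V) * (U * V) = 1\<^sub>m n" using c by simp
  have "U * V * (cadj V * cadj U) = U * (V * (cadj V * cadj U))"
    using Uc Vc by (subst assoc_mult_mat) auto
  also have "\<dots> = U * cadj U" using unitary_cancel(1)[OF V cadj_carrier[OF Uc]] by simp
  also have "\<dots> = 1\<^sub>m n" using U unfolding unitary_def by auto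
  finally have 2: "(U * V) * cadj (U * V) = 1\<^sub>m n" using c by simp
  show ?thesis using 1 2 Uc Vc unfolding unitary_def by auto
qed

lemma unitary_cadj: "unitary n U \<Longrightarrow> unitary n (cadj U)"
  unfolding unitary_def by auto

definition ext :: "complex \<Rightarrow> complex mat \<Rightarrow> complex mat" where
  "ext a M = mat (Suc (dim_row M)) (Suc (dim_col M)) (\<lambda>(i, j).
     if i = 0 \<and> j = 0 then a else if i = 0 \<or> j = 0 then 0 else M $$ (i - 1, j - 1))"

lemma ext_carrier[simp]: "M \<in> carrier_mat n m \<Longrightarrow> ext a M \<in> carrier_mat (Suc n) (Suc m)"
  unfolding ext_def by auto

lemma ext_dims[simp]: "dim_row (ext a M) = Suc (dim_row M)" "dim_col (ext a M) = Suc (dim_col M)"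
  unfolding ext_def by auto

lemma ext_index:
  "i < Suc (dim_row M) \<Longrightarrow> j < Suc (dim_col M) \<Longrightarrow> ext a M $$ (i, j) =
     (if i = 0 \<and> j = 0 then a else if i = 0 \<or> j = 0 then 0 else M $$ (i - 1, j - 1))"
  unfolding ext_def by auto

lemma ext_mult:
  assumes M: "M \<in> carrier_mat n m" and N: "N \<in> carrier_mat m k"
  shows "ext a M * ext b N = ext (a * b) (M * N)"
proof (rule eq_matI)
  fix i j assume i: "i < dim_row (ext (a * b) (M * N))" and j: "j < dim_col (ext (a * b) (M * N))"
  hence i': "i < Suc n" and j': "j < Suc k" using M N by auto
  have "(ext a M * ext b N) $$ (i, j) = (\<Sum>l<Suc m. ext a M $$ (i, l) * ext b N $$ (l, j))"
    by (rule mult_entry) (use M N i' j' in auto)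
  also have "\<dots> = ext a M $$ (i, 0) * ext b N $$ (0, j) +
      (\<Sum>l<m. ext a M $$ (i, Suc l) * ext b N $$ (Suc l, j))"
    by (rule sum.lessThan_Suc_shift)
  also have "\<dots> = ext (a * b) (M * N) $$ (i, j)"
  proof (cases i)
    case 0 thus ?thesis using M N i' j' by (simp add: ext_index)
  next
    case (Suc i0)
    show ?thesis
    proof (cases j)
      case 0 thus ?thesis using M N i' j' Suc by (simp add: ext_index)
    next
      case (Suc j0)
      have "(M * N) $$ (i0, j0) = (\<Sum>l<m. M $$ (i0, l) * N $$ (l, j0))"
        by (rule mult_entry) (use M N i' j' Suc \<open>i = Suc i0\<close> in auto)
      thus ?thesis using M N i' j' Suc \<open>i = Suc i0\<close> by (simp add: ext_index)
    qed
  qed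
  finally show "(ext a M * ext b N) $$ (i, j) = ext (a * b) (M * N) $$ (i, j)" .
qed (use M N in auto)

lemma cadj_ext: "cadj (ext a M) = ext (cnj a) (cadj M)"
  by (rule eq_matI) (auto simp: ext_index)

lemma ext_one: "ext 1 (1\<^sub>m n) = 1\<^sub>m (Suc n)"
  by (rule eq_matI) (auto simp: ext_index)

lemma unitary_ext: assumes U: "unitary n U" shows "unitary (Suc n) (ext 1 U)"
proof -
  have Uc: "U \<in> carrier_mat n n" using U unitary_def by auto
  have "cadj (ext 1 U) * ext 1 U = ext 1 (cadj U * U)"
    using ext_mult[OF cadj_carrier[OF Uc] Uc, of 1 1] by (simp add: cadj_ext)
  moreover have "ext 1 U * cadj (ext 1 U) = ext 1 (U * cadj U)"
    using ext_mult[OF Uc cadj_carrier[OF Uc], of 1 1] by (simp add: cadj_ext)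
  ultimately show ?thesis using U Uc unfolding unitary_def by (simp add: ext_one)
qed

lemma diagonal_ext: "diagonal_mat T \<Longrightarrow> diagonal_mat (ext a T)"
  unfolding diagonal_mat_def by (auto simp: ext_index)

lemma cscalar_entry: "u \<in> carrier_vec m \<Longrightarrow> w \<in> carrier_vec m \<Longrightarrow>
    u \<bullet>c w = (\<Sum>i<m. u $ i * cnj (w $ i))"
  by (auto simp: scalar_prod_def atLeast0LessThan intro!: sum.cong)

lemma cscalar_self: "w \<in> carrier_vec m \<Longrightarrow>
    w \<bullet>c w = of_real (\<Sum>i<m. (cmod (w $ i))\<^sup>2)"
proof -
  assume w: "w \<in> carrier_vec m"
  have "w \<bullet>c w = (\<Sum>i<m. w $ i * cnj (w $ i))" by (rule cscalar_entry[OF w w])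
  also have "\<dots> = (\<Sum>i<m. of_real ((cmod (w $ i))\<^sup>2))"
    by (intro sum.cong refl) (metis complex_norm_square)
  finally show ?thesis by (simp only: of_real_sum)
qed

lemma unitary_first_col:
  assumes v: "v \<in> carrier_vec (Suc n)" and v0: "v \<noteq> 0\<^sub>v (Suc n)"
  shows "\<exists>W c. unitary (Suc n) W \<and> (\<forall>i<Suc n. W $$ (i, 0) = c * v $ i)"
proof -
  interpret cof_vec_space "Suc n" "TYPE(complex)" .
  define b where "b = basis_completion v"
  from basis_completion[OF v v0, folded b_def]
  have b: "set b \<subseteq> carrier_vec (Suc n)" and dist_b: "distinct b"
    and indep: "\<not> lin_dep (set b)" and len_b: "length b = Suc n" and hdb: "hd b = v" by auto
  from hdb len_b obtain vs where bv: "b = v # vs" by (cases b) auto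
  define ws where "ws = gram_schmidt (Suc n) b"
  from gram_schmidt_result[OF b dist_b indep ws_def]
  have ws: "set ws \<subseteq> carrier_vec (Suc n)" and orth: "corthogonal ws" and len: "length ws = Suc n"
    using len_b by auto
  have hdws: "hd ws = v" unfolding ws_def bv using v by simp
  have wsj: "ws ! j \<in> carrier_vec (Suc n)" if "j < Suc n" for j using ws len that by auto
  define r where "r j = (\<Sum>i<Suc n. (cmod (ws ! j $ i))\<^sup>2)" for j
  have wr: "ws ! j \<bullet>c ws ! j = of_real (r j)" if "j < Suc n" for j
    unfolding r_def using cscalar_self[OF wsj[OF that]] .
  have rpos: "r j > 0" if j: "j < Suc n" for j
  proof -
    have "ws ! j \<bullet>c ws ! j \<noteq> 0" using corthogonalD[OF orth, of j j] len j by auto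
    hence "r j \<noteq> 0" using wr[OF j] by auto
    moreover have "r j \<ge> 0" unfolding r_def by (intro sum_nonneg) auto
    ultimately show ?thesis by simp
  qed
  define s where "s j = complex_of_real (sqrt (r j))" for j
  have s0: "s j \<noteq> 0" if "j < Suc n" for j using rpos[OF that] unfolding s_def by simp
  have cs: "cnj (s j) = s j" for j unfolding s_def by simp
  have ss: "s j * s j = of_real (r j)" if "j < Suc n" for j
    using rpos[OF that] unfolding s_def by (simp flip: of_real_mult)
  define W where "W = mat (Suc n) (Suc n) (\<lambda>(i, j). ws ! j $ i / s j)"
  have Wc: "W \<in> carrier_mat (Suc n) (Suc n)" unfolding W_def by simp
  have WW: "cadj W * W = 1\<^sub>m (Suc n)"
  proof (rule eq_matI)
    fix j k assume j: "j < dim_row (1\<^sub>m (Suc n))" and k: "k < dim_col (1\<^sub>m (Suc n))"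
    hence j': "j < Suc n" and k': "k < Suc n" by auto
    have "(cadj W * W) $$ (j, k) = (\<Sum>i<Suc n. cadj W $$ (j, i) * W $$ (i, k))"
      by (rule mult_entry[OF cadj_carrier[OF Wc] Wc j' k'])
    also have "\<dots> = (\<Sum>i<Suc n. ws ! k $ i * cnj (ws ! j $ i) / (s j * s k))"
      by (intro sum.cong refl) (use j' k' Wc in \<open>auto simp: W_def cs\<close>)
    also have "\<dots> = (\<Sum>i<Suc n. ws ! k $ i * cnj (ws ! j $ i)) / (s j * s k)"
      by (rule sum_divide_distrib[symmetric])
    also have "\<dots> = (ws ! k \<bullet>c ws ! j) / (s j * s k)"
      using cscalar_entry[OF wsj[OF k'] wsj[OF j']] by simp
    also have "\<dots> = 1\<^sub>m (Suc n) $$ (j, k)"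
    proof (cases "j = k")
      case True thus ?thesis using wr[OF j'] ss[OF j'] rpos[OF j'] j' by simp
    next
      case False
      hence "ws ! k \<bullet>c ws ! j = 0" using corthogonalD[OF orth, of k j] len j' k' by auto
      thus ?thesis using False j' k' by simp
    qed
    finally show "(cadj W * W) $$ (j, k) = 1\<^sub>m (Suc n) $$ (j, k)" .
  qed (use Wc in auto)
  have WW': "W * cadj W = 1\<^sub>m (Suc n)"
    by (rule mat_mult_left_right_inverse[OF cadj_carrier[OF Wc] Wc WW])
  have "unitary (Suc n) W" unfolding unitary_def using Wc WW WW' by auto
  moreover have "\<forall>i<Suc n. W $$ (i, 0) = (1 / s 0) * v $ i"
    using hdws len unfolding W_def by (cases ws) auto
  ultimately show ?thesis by blast
qed

lemma assoc5:
  assumes "W \<in> carrier_mat n n" "X \<in> carrier_mat n n" "Y \<in> carrier_mat n n" "Z \<in> carrier_mat n n" "V \<in> carrier_mat n n"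
  shows "W * X * Y * (Z * V) = W * (X * Y * Z) * V"
proof -
  have c1: "W * X * Y \<in> carrier_mat n n" "X * Y \<in> carrier_mat n n" "X * Y * Z \<in> carrier_mat n n"
    using assms by auto
  have e1: "W * X * Y * (Z * V) = W * X * Y * Z * V"
    by (rule assoc_mult_mat[symmetric, OF c1(1) assms(4,5)])
  have e2: "W * X * Y = W * (X * Y)" by (rule assoc_mult_mat[OF assms(1,2,3)])
  have e3: "W * (X * Y) * Z = W * (X * Y * Z)" by (rule assoc_mult_mat[OF assms(1) c1(2) assms(4)])
  have "W * X * Y * (Z * V) = W * X * Y * Z * V" by (rule e1)
  also have "\<dots> = W * (X * Y) * Z * V" by (simp only: e2)
  also have "\<dots> = W * (X * Y * Z) * V" by (simp only: e3)
  finally show ?thesis .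
qed

lemma spectral:
  assumes "A \<in> carrier_mat n n" "cadj A = A"
  shows "\<exists>U T. unitary n U \<and> T \<in> carrier_mat n n \<and> diagonal_mat T \<and> A = U * T * cadj U"
  using assms
proof (induction n arbitrary: A)
  case 0
  have "unitary 0 (1\<^sub>m 0)" unfolding unitary_def by simp
  moreover have "A = 1\<^sub>m 0 * A * cadj (1\<^sub>m 0)" using 0 by simp
  moreover have "diagonal_mat A" using 0 unfolding diagonal_mat_def by simp
  ultimately show ?case using 0 by blast
next
  case (Suc n A)
  have A: "A \<in> carrier_mat (Suc n) (Suc n)" and Ah: "cadj A = A" using Suc by auto
  have "degree (char_poly A) = Suc n" using degree_monic_char_poly[OF A] by simp
  hence "\<not> constant (poly (char_poly A))" by (simp add: constant_degree)
  then obtain e where "poly (char_poly A) e = 0" using fundamental_theorem_of_algebra by blast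
  hence "eigenvalue A e" by (simp add: eigenvalue_root_char_poly[OF A])
  from find_eigenvector[OF A this]
  obtain v where "eigenvector A v e" by blast
  hence v: "v \<in> carrier_vec (Suc n)" and v0: "v \<noteq> 0\<^sub>v (Suc n)" and Av: "A *\<^sub>v v = e \<cdot>\<^sub>v v"
    using A unfolding eigenvector_def by auto
  obtain W c where W: "unitary (Suc n) W" and Wc0: "\<forall>i<Suc n. W $$ (i, 0) = c * v $ i"
    using unitary_first_col[OF v v0] by blast
  have Wc: "W \<in> carrier_mat (Suc n) (Suc n)" using W unitary_def by auto
  define B where "B = cadj W * A * W"
  have Bc: "B \<in> carrier_mat (Suc n) (Suc n)" unfolding B_def using Wc A by auto
  have Beq: "B = cadj W * (A * W)" unfolding B_def by (rule assoc_mult_mat[OF cadj_carrier[OF Wc] A Wc])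
  have Bh: "cadj B = B"
  proof -
    have "cadj B = cadj (A * W) * cadj (cadj W)"
      unfolding Beq by (rule cadj_mult) (use Wc A in auto)
    also have "cadj (A * W) = cadj W * A" using cadj_mult[OF A Wc] Ah by simp
    finally show ?thesis unfolding B_def by simp
  qed
  have AW0: "(A * W) $$ (k, 0) = e * W $$ (k, 0)" if k: "k < Suc n" for k
  proof -
    have "(A * W) $$ (k, 0) = (\<Sum>l<Suc n. A $$ (k, l) * W $$ (l, 0))"
      by (rule mult_entry[OF A Wc k]) simp
    also have "\<dots> = c * (\<Sum>l<Suc n. A $$ (k, l) * v $ l)"
      using Wc0 by (simp add: sum_distrib_left algebra_simps)
    also have "(\<Sum>l<Suc n. A $$ (k, l) * v $ l) = (A *\<^sub>v v) $ k"
      using A v k by (auto simp: scalar_prod_def atLeast0LessThan intro!: sum.cong)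
    also have "\<dots> = e * v $ k" using Av v k by simp
    finally show ?thesis using Wc0 k by simp
  qed
  have B0: "B $$ (i, 0) = (if i = 0 then e else 0)" if i: "i < Suc n" for i
  proof -
    have "B = cadj W * (A * W)" by (rule Beq)
    hence "B $$ (i, 0) = (\<Sum>k<Suc n. cadj W $$ (i, k) * (A * W) $$ (k, 0))"
      using mult_entry[of "cadj W" "Suc n" "Suc n" "A * W" "Suc n" i 0] Wc A i by simp
    also have "\<dots> = e * (\<Sum>k<Suc n. cadj W $$ (i, k) * W $$ (k, 0))"
      using AW0 by (simp add: sum_distrib_left algebra_simps)
    also have "(\<Sum>k<Suc n. cadj W $$ (i, k) * W $$ (k, 0)) = (cadj W * W) $$ (i, 0)"
      by (rule mult_entry[symmetric]) (use Wc i in auto)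
    also have "\<dots> = (if i = 0 then 1 else 0)" using W i unfolding unitary_def by simp
    finally show ?thesis by simp
  qed
  have er: "cnj e = e"
  proof -
    have "cadj B $$ (0, 0) = cnj (B $$ (0, 0))" using Bc by simp
    thus ?thesis using Bh B0[of 0] by simp
  qed
  have B0': "B $$ (0, j) = (if j = 0 then e else 0)" if j: "j < Suc n" for j
  proof -
    have "B $$ (0, j) = cadj B $$ (0, j)" using Bh by simp
    also have "\<dots> = cnj (B $$ (j, 0))" using Bc j by simp
    finally show ?thesis using B0[OF j] er by simp
  qed
  define B4 where "B4 = mat n n (\<lambda>(i, j). B $$ (Suc i, Suc j))"
  have B4c: "B4 \<in> carrier_mat n n" unfolding B4_def by simp
  have B4h: "cadj B4 = B4"
  proof (rule eq_matI)
    fix i j assume "i < dim_row B4" "j < dim_col B4"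
    hence i: "i < n" and j: "j < n" using B4c by auto
    have "cadj B4 $$ (i, j) = cnj (B $$ (Suc j, Suc i))" using i j unfolding B4_def by simp
    also have "\<dots> = cadj B $$ (Suc i, Suc j)" using Bc i j by simp
    finally show "cadj B4 $$ (i, j) = B4 $$ (i, j)" using Bh i j unfolding B4_def by simp
  qed (use B4c in auto)
  have BB4: "B = ext e B4"
  proof (rule eq_matI)
    fix i j assume "i < dim_row (ext e B4)" "j < dim_col (ext e B4)"
    hence i: "i < Suc n" and j: "j < Suc n" using B4c by auto
    show "B $$ (i, j) = ext e B4 $$ (i, j)"
    proof (cases "i = 0")
      case True thus ?thesis using B0'[OF j] i j B4c by (simp add: ext_index)
    next
      case False
      show ?thesis
      proof (cases "j = 0")
        case True thus ?thesis using B0[OF i] False i j B4c by (simp add: ext_index)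
      next
        case False
        thus ?thesis using \<open>i \<noteq> 0\<close> i j B4c by (auto simp: ext_index B4_def)
      qed
    qed
  qed (use Bc B4c in auto)
  obtain U' T' where U': "unitary n U'" and T'c: "T' \<in> carrier_mat n n" and T'd: "diagonal_mat T'"
    and B4e: "B4 = U' * T' * cadj U'"
    using Suc.IH[OF B4c B4h] by blast
  have U'c: "U' \<in> carrier_mat n n" using U' unitary_def by auto
  define U where "U = W * ext 1 U'"
  define T where "T = ext e T'"
  have Uu: "unitary (Suc n) U" unfolding U_def by (rule unitary_mult[OF W unitary_ext[OF U']])
  have Tc: "T \<in> carrier_mat (Suc n) (Suc n)" unfolding T_def using T'c by simp
  have Td: "diagonal_mat T" unfolding T_def by (rule diagonal_ext[OF T'd])
  have cU: "cadj U = ext 1 (cadj U') * cadj W"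
    unfolding U_def using Wc U'c by (simp add: cadj_mult[of W "Suc n" "Suc n" _ "Suc n"] cadj_ext)
  have "ext 1 U' * T * ext 1 (cadj U') = ext 1 U' * ext e T' * ext 1 (cadj U')" unfolding T_def ..
  also have "\<dots> = ext e (U' * T') * ext 1 (cadj U')" using ext_mult[OF U'c T'c, of 1 e] by simp
  also have "\<dots> = ext e (U' * T' * cadj U')"
    using ext_mult[of "U' * T'" n n "cadj U'" n e 1] U'c T'c by simp
  finally have mid: "ext 1 U' * T * ext 1 (cadj U') = B" using BB4 B4e by simp
  have "U * T * cadj U = W * (ext 1 U' * T * ext 1 (cadj U')) * cadj W"
  proof -
    have E1: "ext 1 U' \<in> carrier_mat (Suc n) (Suc n)" using U'c by simp
    have E2: "ext 1 (cadj U') \<in> carrier_mat (Suc n) (Suc n)" using U'c by simp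
    have cW: "cadj W \<in> carrier_mat (Suc n) (Suc n)" using Wc by simp
    show ?thesis unfolding cU unfolding U_def by (rule assoc5[OF Wc E1 Tc E2 cW])
  qed
  also have "\<dots> = W * (B * cadj W)"
    unfolding mid by (rule assoc_mult_mat[OF Wc Bc cadj_carrier[OF Wc]])
  also have "B * cadj W = cadj W * A * (W * cadj W)"
    unfolding B_def using Wc A by (intro assoc_mult_mat) auto
  also have "\<dots> = cadj W * A" using W A unfolding unitary_def by simp
  also have "W * (cadj W * A) = A" by (rule unitary_cancel(1)[OF W A])
  finally have "A = U * T * cadj U" by simp
  thus ?case using Uu Tc Td by blast
qed

lemma proots_linear_prod: "proots (\<Prod>a\<leftarrow>xs. [:- a, 1:]) = mset (xs :: complex list)"
proof (induction xs)
  case (Cons a xs)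
  have nz: "(\<Prod>b\<leftarrow>xs. [:- b, 1:]) \<noteq> (0 :: complex poly)"
    by (simp only: prod_list_zero_iff) auto
  have "(\<Prod>b\<leftarrow>a # xs. [:- b, 1:]) = [:- a, 1:] * (\<Prod>b\<leftarrow>xs. [:- b, 1:])" by (simp only: list.map prod_list.Cons)
  moreover have "proots ([:- a, 1:] * (\<Prod>b\<leftarrow>xs. [:- b, 1:])) = proots [:- a, 1:] + proots (\<Prod>b\<leftarrow>xs. [:- b, 1:])"
    by (rule proots_mult[OF _ nz]) simp
  ultimately have "proots (\<Prod>b\<leftarrow>a # xs. [:- b, 1:]) = proots [:- a, 1:] + proots (\<Prod>b\<leftarrow>xs. [:- b, 1:])"
    by (simp only:)
  also have "proots [:- a, 1:] = {#a#}" using proots_linear_factor[of "-a"] by simp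
  also have "proots (\<Prod>b\<leftarrow>xs. [:- b, 1:]) = mset xs" by (rule Cons.IH)
  finally show ?case by simp
qed simp

lemma vN_entropy_diag:
  assumes A: "A \<in> carrier_mat n n" and U: "unitary n U" and T: "T \<in> carrier_mat n n"
    and Td: "diagonal_mat T" and AT: "A = U * T * cadj U"
  shows "vN_entropy A = (\<Sum>i<n. eta (Re (T $$ (i, i))))"
proof -
  have "similar_mat_wit A T U (cadj U)"
    unfolding similar_mat_wit_def using A U T AT unfolding unitary_def by (auto simp: Let_def)
  hence "similar_mat A T" unfolding similar_mat_def by blast
  hence "char_poly A = char_poly T" by (rule char_poly_similar)
  also have "\<dots> = (\<Prod>a\<leftarrow>diag_mat T. [:- a, 1:])"
  proof (rule char_poly_upper_triangular[OF T])
    show "upper_triangular T" using Td T unfolding diagonal_mat_def upper_triangular_def by auto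
  qed
  finally have cp: "char_poly A = (\<Prod>a\<leftarrow>diag_mat T. [:- a, 1:])" .
  have pr: "proots (char_poly A) = mset (diag_mat T)"
    unfolding cp by (rule proots_linear_prod)
  have "vN_entropy A = sum_list (map (\<lambda>z. eta (Re z)) (diag_mat T))"
    unfolding vN_entropy_def pr by (metis mset_map sum_mset_sum_list)
  also have "\<dots> = (\<Sum>i<n. eta (Re (T $$ (i, i))))"
    using T unfolding diag_mat_def by (simp add: sum_list_distinct_conv_sum_set atLeast0LessThan o_def)
  finally show ?thesis .
qed

lemma core_real:
  fixes mu lam :: "nat \<Rightarrow> real" and w :: "nat \<Rightarrow> nat \<Rightarrow> real" and N :: nat
  assumes mu0: "\<And>j. j < N \<Longrightarrow> mu j \<ge> 0" and mu1: "(\<Sum>j<N. mu j) = 1"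
    and w0: "\<And>i j. i < N \<Longrightarrow> j < N \<Longrightarrow> w i j \<ge> 0"
    and wrow: "\<And>j. j < N \<Longrightarrow> (\<Sum>i<N. w i j) = 1"
    and wcol: "\<And>i. i < N \<Longrightarrow> (\<Sum>j<N. w i j) = 1"
    and lam0: "\<And>i. i < N \<Longrightarrow> lam i \<ge> 0"
    and lamw: "\<And>i. i < N \<Longrightarrow> lam i > 0 \<Longrightarrow> lam i = (\<Sum>j<N. mu j * w i j)"
    and bessel: "\<And>j. j < N \<Longrightarrow> (\<Sum>i\<in>{i. i < N \<and> lam i > 0}. mu j * w i j / lam i) \<le> 1"
  defines "p \<equiv> (\<Sum>i<N. lam i)"
  shows "(\<Sum>i<N. eta (lam i)) \<le> (\<Sum>j<N. eta (mu j)) + (1 - p)"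
    and "(\<Sum>j<N. eta (mu j)) \<le> (\<Sum>i<N. eta (lam i)) + real N * eta ((1 - p) / real N)"
    and "p \<le> 1"
proof -
  define I where "I = {i. i < N \<and> lam i > 0}"
  have finI: "finite I" and IN: "I \<subseteq> {..<N}" unfolding I_def by auto
  define delta where "delta i = (\<Sum>j<N. mu j * w i j)" for i
  have mule1: "mu j \<le> 1" if "j < N" for j
  proof -
    have "mu j \<le> (\<Sum>j<N. mu j)" using that mu0 by (intro member_le_sum) auto
    thus ?thesis using mu1 by simp
  qed
  have delta0: "delta i \<ge> 0" if "i < N" for i
    unfolding delta_def using mu0 w0 that by (intro sum_nonneg) auto
  have sumdelta: "(\<Sum>i<N. delta i) = 1"
  proof -
    have "(\<Sum>i<N. delta i) = (\<Sum>j<N. mu j * (\<Sum>i<N. w i j))"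
      unfolding delta_def by (subst sum.swap) (simp add: sum_distrib_left)
    also have "\<dots> = 1" using wrow mu1 by simp
    finally show ?thesis .
  qed
  have lam_delta: "lam i = delta i" if "i \<in> I" for i using lamw that unfolding I_def delta_def by auto
  have etalam0: "eta (lam i) = 0" if "i < N" "i \<notin> I" for i
  proof -
    have "lam i = 0" using that lam0 unfolding I_def by force
    thus ?thesis by simp
  qed
  have sumI: "(\<Sum>i<N. f i) = (\<Sum>i\<in>I. f i)" if "\<And>i. i < N \<Longrightarrow> i \<notin> I \<Longrightarrow> f i = 0" for f :: "nat \<Rightarrow> real"
    using that IN by (intro sum.mono_neutral_right) auto
  have pI: "p = (\<Sum>i\<in>I. delta i)"
  proof -
    have "p = (\<Sum>i\<in>I. lam i)" unfolding p_def
      by (rule sumI) (use lam0 in \<open>force simp: I_def\<close>)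
    thus ?thesis using lam_delta by simp
  qed
  define t where "t i = (if i \<in> I then 0 else delta i)" for i
  have t0: "t i \<ge> 0" if "i < N" for i using delta0 that unfolding t_def by auto
  have sumt: "(\<Sum>i<N. t i) = 1 - p"
  proof -
    have "(\<Sum>i<N. delta i) = (\<Sum>i<N. t i) + (\<Sum>i<N. if i \<in> I then delta i else 0)"
      unfolding t_def sum.distrib[symmetric] by (intro sum.cong) auto
    also have "(\<Sum>i<N. if i \<in> I then delta i else 0) = (\<Sum>i\<in>I. delta i)"
      using IN by (simp add: sum.If_cases Int_absorb1)
    finally show ?thesis using sumdelta pI by simp
  qed
  show "p \<le> 1" using sumt t0 by (metis diff_ge_0_iff_ge sum_nonneg lessThan_iff)
  have schur: "(\<Sum>j<N. eta (mu j)) \<le> (\<Sum>i<N. eta (delta i))"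
  proof -
    have "(\<Sum>j<N. eta (mu j)) = (\<Sum>j<N. (\<Sum>i<N. w i j) * eta (mu j))" using wrow by simp
    also have "\<dots> = (\<Sum>j<N. \<Sum>i<N. w i j * eta (mu j))"
      by (simp only: sum_distrib_right)
    also have "\<dots> = (\<Sum>i<N. \<Sum>j<N. w i j * eta (mu j))"
      by (rule sum.swap)
    also have "\<dots> \<le> (\<Sum>i<N. eta (\<Sum>j<N. w i j * mu j))"
    proof (rule sum_mono)
      fix i assume i: "i \<in> {..<N}"
      show "(\<Sum>j<N. w i j * eta (mu j)) \<le> eta (\<Sum>j<N. w i j * mu j)"
        by (rule eta_jensen) (use w0 wcol mu0 i in auto)
    qed
    also have "\<dots> = (\<Sum>i<N. eta (delta i))" unfolding delta_def
      by (intro sum.cong refl arg_cong[where f = eta]) (rule mult.commute)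
    finally show ?thesis .
  qed
  have split: "(\<Sum>i<N. eta (delta i)) = (\<Sum>i<N. eta (lam i)) + (\<Sum>i<N. eta (t i))"
  proof -
    have pt: "eta (delta i) = eta (lam i) + eta (t i)" if "i < N" for i
    proof (cases "i \<in> I")
      case True thus ?thesis using lam_delta[OF True] unfolding t_def by simp
    next
      case False thus ?thesis using etalam0[OF that False] unfolding t_def by simp
    qed
    have "(\<Sum>i<N. eta (delta i)) = (\<Sum>i<N. eta (lam i) + eta (t i))"
      by (intro sum.cong refl) (rule pt, simp)
    thus ?thesis by (simp only: sum.distrib)
  qed
  show "(\<Sum>j<N. eta (mu j)) \<le> (\<Sum>i<N. eta (lam i)) + real N * eta ((1 - p) / real N)"
  proof (cases "N = 0")
    case True thus ?thesis using mu1 by simp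
  next
    case False
    have "(\<Sum>i<N. eta (t i)) \<le> card {..<N} * eta (sum t {..<N} / card {..<N})"
      by (rule eta_uniform) (use False t0 in auto)
    thus ?thesis using schur split sumt by simp
  qed
  define c where "c j = (\<Sum>i\<in>I. w i j)" for j
  have c0: "c j \<ge> 0" if "j < N" for j unfolding c_def using w0 that IN by (intro sum_nonneg) auto
  have c1: "c j \<le> 1" if "j < N" for j
  proof -
    have "c j \<le> (\<Sum>i<N. w i j)" unfolding c_def using IN w0 that by (intro sum_mono2) auto
    thus ?thesis using wrow that by simp
  qed
  have step1: "(\<Sum>i\<in>I. eta (lam i)) \<le> (\<Sum>j<N. eta (mu j * c j))"
  proof -
    have "(\<Sum>i\<in>I. eta (lam i)) = (\<Sum>i\<in>I. (\<Sum>j<N. mu j * w i j / lam i) * eta (lam i))"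
    proof (intro sum.cong refl)
      fix i assume i: "i \<in> I"
      have "(\<Sum>j<N. mu j * w i j / lam i) = delta i / lam i"
        unfolding delta_def by (simp add: sum_divide_distrib)
      also have "\<dots> = 1" using lam_delta[OF i] i unfolding I_def by simp
      finally show "eta (lam i) = (\<Sum>j<N. mu j * w i j / lam i) * eta (lam i)" by simp
    qed
    also have "\<dots> = (\<Sum>j<N. \<Sum>i\<in>I. (mu j * w i j / lam i) * eta (lam i))"
      by (subst sum.swap) (simp add: sum_distrib_right)
    also have "\<dots> \<le> (\<Sum>j<N. eta (\<Sum>i\<in>I. (mu j * w i j / lam i) * lam i))"
    proof (intro sum_mono eta_jensen finI)
      fix j assume j: "j \<in> {..<N}"
      show "(\<Sum>i\<in>I. mu j * w i j / lam i) \<le> 1" using bessel j unfolding I_def by auto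
      fix i assume "i \<in> I"
      thus "0 \<le> mu j * w i j / lam i" "0 \<le> lam i" using mu0 w0 j unfolding I_def by auto
    qed
    also have "\<dots> = (\<Sum>j<N. eta (mu j * c j))"
    proof (intro sum.cong refl arg_cong[where f = eta])
      fix j
      have "(\<Sum>i\<in>I. (mu j * w i j / lam i) * lam i) = (\<Sum>i\<in>I. mu j * w i j)"
        by (intro sum.cong refl) (auto simp: I_def)
      thus "(\<Sum>i\<in>I. (mu j * w i j / lam i) * lam i) = mu j * c j"
        unfolding c_def by (simp add: sum_distrib_left)
    qed
    finally show ?thesis .
  qed
  have step2: "(\<Sum>j<N. eta (mu j * c j)) \<le> (\<Sum>j<N. eta (mu j)) + (1 - p)"
  proof -
    have "(\<Sum>j<N. eta (mu j * c j)) \<le> (\<Sum>j<N. eta (mu j) + mu j * (1 - c j))"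
    proof (intro sum_mono)
      fix j assume "j \<in> {..<N}"
      hence j: "j < N" by simp
      have "eta (mu j * c j) = mu j * eta (c j) + c j * eta (mu j)"
        by (rule eta_mult) (use mu0 c0 j in auto)
      also have "mu j * eta (c j) \<le> mu j * (1 - c j)"
        using eta_le_one_minus[OF c0[OF j]] mu0[OF j] by (intro mult_left_mono) auto
      also have "c j * eta (mu j) \<le> 1 * eta (mu j)"
        using c1[OF j] eta_nonneg[OF mu0[OF j] mule1[OF j]] by (intro mult_right_mono) auto
      finally show "eta (mu j * c j) \<le> eta (mu j) + mu j * (1 - c j)" by simp
    qed
    also have "\<dots> = (\<Sum>j<N. eta (mu j)) + (1 - (\<Sum>j<N. mu j * c j))"
      using mu1 by (simp add: sum.distrib algebra_simps sum_subtractf)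
    also have "(\<Sum>j<N. mu j * c j) = p"
    proof -
      have "(\<Sum>j<N. mu j * c j) = (\<Sum>i\<in>I. \<Sum>j<N. mu j * w i j)"
        unfolding c_def by (simp add: sum_distrib_left) (rule sum.swap)
      thus ?thesis using pI unfolding delta_def by simp
    qed
    finally show ?thesis .
  qed
  have "(\<Sum>i<N. eta (lam i)) = (\<Sum>i\<in>I. eta (lam i))" by (rule sumI) (rule etalam0)
  thus "(\<Sum>i<N. eta (lam i)) \<le> (\<Sum>j<N. eta (mu j)) + (1 - p)" using step1 step2 by simp
qed

lemma mcnj: "z * cnj z = complex_of_real ((cmod z)\<^sup>2)"
  by (rule complex_norm_square[symmetric])

lemma bessel:
  fixes a :: "nat \<Rightarrow> nat \<Rightarrow> complex"
  assumes fin: "finite I"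
    and orth: "\<And>i k. i \<in> I \<Longrightarrow> k \<in> I \<Longrightarrow> (\<Sum>l<N. cnj (a i l) * a k l) = (if i = k then 1 else 0)"
    and j: "j < N"
  shows "(\<Sum>i\<in>I. (cmod (a i j))\<^sup>2) \<le> 1"
proof -
  define c where "c = (\<Sum>i\<in>I. (cmod (a i j))\<^sup>2)"
  have c0: "c \<ge> 0" unfolding c_def by (intro sum_nonneg) auto
  define P where "P l = (\<Sum>i\<in>I. a i j * cnj (a i l))" for l
  have Pc: "P l * cnj (P l) = (\<Sum>i\<in>I. \<Sum>k\<in>I. (a i j * cnj (a k j)) * (cnj (a i l) * a k l))" for l
  proof -
    have "cnj (P l) = (\<Sum>k\<in>I. cnj (a k j) * a k l)" unfolding P_def by simp
    hence "P l * cnj (P l) = (\<Sum>i\<in>I. \<Sum>k\<in>I. (a i j * cnj (a i l)) * (cnj (a k j) * a k l))"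
      unfolding P_def by (simp only: sum_product)
    also have "\<dots> = (\<Sum>i\<in>I. \<Sum>k\<in>I. (a i j * cnj (a k j)) * (cnj (a i l) * a k l))"
      by (intro sum.cong refl) (simp only: mult_ac)
    finally show ?thesis .
  qed
  have sw: "(\<Sum>l<N. \<Sum>i\<in>I. \<Sum>k\<in>I. F i k l) = (\<Sum>i\<in>I. \<Sum>k\<in>I. \<Sum>l<N. F i k l)" for F :: "nat \<Rightarrow> nat \<Rightarrow> nat \<Rightarrow> complex"
    by (subst sum.swap, rule sum.cong[OF refl], rule sum.swap)
  have "(\<Sum>l<N. P l * cnj (P l)) = (\<Sum>i\<in>I. \<Sum>k\<in>I. \<Sum>l<N. (a i j * cnj (a k j)) * (cnj (a i l) * a k l))"
    unfolding Pc by (rule sw)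
  also have "\<dots> = (\<Sum>i\<in>I. \<Sum>k\<in>I. (a i j * cnj (a k j)) * (\<Sum>l<N. cnj (a i l) * a k l))"
    by (simp only: sum_distrib_left)
  also have "\<dots> = (\<Sum>i\<in>I. \<Sum>k\<in>I. if k = i then a i j * cnj (a i j) else 0)"
  proof (intro sum.cong refl)
    fix i k assume "i \<in> I" "k \<in> I"
    thus "(a i j * cnj (a k j)) * (\<Sum>l<N. cnj (a i l) * a k l) = (if k = i then a i j * cnj (a i j) else 0)"
      using orth[of i k] by auto
  qed
  also have "\<dots> = (\<Sum>i\<in>I. a i j * cnj (a i j))" using fin by simp
  also have "\<dots> = (\<Sum>i\<in>I. of_real ((cmod (a i j))\<^sup>2))" by (intro sum.cong refl) (rule mcnj)
  finally have S1: "(\<Sum>l<N. P l * cnj (P l)) = of_real c" unfolding c_def by simp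
  have "(\<Sum>l<N. P l * cnj (P l)) = of_real (\<Sum>l<N. (cmod (P l))\<^sup>2)"
    unfolding of_real_sum by (intro sum.cong refl) (rule mcnj)
  hence "complex_of_real (\<Sum>l<N. (cmod (P l))\<^sup>2) = complex_of_real c" using S1 by (rule trans[OF sym])
  hence S2: "(\<Sum>l<N. (cmod (P l))\<^sup>2) = c" by (simp only: of_real_eq_iff)
  have "P j = (\<Sum>i\<in>I. of_real ((cmod (a i j))\<^sup>2))" unfolding P_def
    by (intro sum.cong refl) (rule mcnj)
  hence "P j = of_real c" unfolding c_def by (simp add: of_real_sum)
  hence "(cmod (P j))\<^sup>2 = c\<^sup>2" using c0 by simp
  moreover have "(cmod (P j))\<^sup>2 \<le> (\<Sum>l<N. (cmod (P l))\<^sup>2)" using j by (intro member_le_sum) auto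
  ultimately have "c\<^sup>2 \<le> c" using S2 by simp
  hence cc: "c * c \<le> c * 1" by (simp add: power2_eq_square)
  have "c \<le> 1"
  proof (cases "c = 0")
    case False thus ?thesis using cc c0 by (simp add: mult_le_cancel_left_pos)
  qed simp
  thus ?thesis unfolding c_def .
qed

lemma mult_diag_right:
  assumes T: "T \<in> carrier_mat n n" and Td: "diagonal_mat T" and X: "X \<in> carrier_mat m n"
    and j: "j < m" and i: "i < n"
  shows "(X * T) $$ (j, i) = X $$ (j, i) * T $$ (i, i)"
proof -
  have "(X * T) $$ (j, i) = (\<Sum>k<n. X $$ (j, k) * T $$ (k, i))" by (rule mult_entry[OF X T j i])
  also have "\<dots> = (\<Sum>k<n. if k = i then X $$ (j, i) * T $$ (i, i) else 0)"
    using Td T i unfolding diagonal_mat_def by (intro sum.cong refl) auto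
  also have "\<dots> = X $$ (j, i) * T $$ (i, i)" using i by simp
  finally show ?thesis .
qed

lemma core:
  fixes N :: nat and mu :: "nat \<Rightarrow> real" and q :: "complex mat"
  assumes mu0: "\<And>j. j < N \<Longrightarrow> mu j \<ge> 0" and mu1: "(\<Sum>j<N. mu j) = 1"
    and qc: "q \<in> carrier_mat N N" and qq: "q * q = q" and qh: "cadj q = q"
  defines "L \<equiv> mat N N (\<lambda>(i, j). if i = j then complex_of_real (mu i) else 0)"
    and "p \<equiv> (\<Sum>j<N. mu j * Re (q $$ (j, j)))"
  shows "vN_entropy (q * L * q) \<le> (\<Sum>j<N. eta (mu j)) + (1 - p)"
    and "(\<Sum>j<N. eta (mu j)) \<le> vN_entropy (q * L * q) + real N * eta ((1 - p) / real N)"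
    and "p \<le> 1"
proof -
  have Lc: "L \<in> carrier_mat N N" unfolding L_def by simp
  have Ld: "diagonal_mat L" unfolding L_def diagonal_mat_def by auto
  have Lh: "cadj L = L" unfolding L_def by (rule eq_matI) auto
  have Lii: "L $$ (i, i) = complex_of_real (mu i)" if "i < N" for i using that unfolding L_def by simp
  define A where "A = q * L * q"
  have mc: "\<And>X Y. X \<in> carrier_mat N N \<Longrightarrow> Y \<in> carrier_mat N N \<Longrightarrow> X * Y \<in> carrier_mat N N" by auto
  have as: "\<And>X Y Z. X \<in> carrier_mat N N \<Longrightarrow> Y \<in> carrier_mat N N \<Longrightarrow> Z \<in> carrier_mat N N \<Longrightarrow> X * Y * Z = X * (Y * Z)"
    by (rule assoc_mult_mat)
  have qLc: "q * L \<in> carrier_mat N N" using qc Lc by simp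
  have Ac: "A \<in> carrier_mat N N" unfolding A_def using qc Lc by simp
  have Ah: "cadj A = A"
  proof -
    have "cadj A = cadj q * cadj (q * L)" unfolding A_def by (rule cadj_mult[OF qLc qc])
    also have "cadj (q * L) = cadj L * cadj q" by (rule cadj_mult[OF qc Lc])
    finally show ?thesis unfolding A_def using qh Lh as[OF qc Lc qc] by simp
  qed
  obtain V T where V: "unitary N V" and Tc: "T \<in> carrier_mat N N" and Td: "diagonal_mat T"
    and AVT: "A = V * T * cadj V"
    using spectral[OF Ac Ah] by blast
  have Vc: "V \<in> carrier_mat N N" and VV1: "cadj V * V = 1\<^sub>m N" and VV2: "V * cadj V = 1\<^sub>m N"
    using V unfolding unitary_def by auto
  have cVc: "cadj V \<in> carrier_mat N N" using Vc by simp
  have canc: "\<And>X. X \<in> carrier_mat N N \<Longrightarrow> cadj V * (V * X) = X"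
    "\<And>X. X \<in> carrier_mat N N \<Longrightarrow> V * (cadj V * X) = X"
    using unitary_cancel[OF V] by auto
  define Q where "Q = q * V"
  have Qc: "Q \<in> carrier_mat N N" unfolding Q_def using qc Vc by simp
  have cQ: "cadj Q = cadj V * q" unfolding Q_def using cadj_mult[OF qc Vc] qh by simp
  have TQ: "T = cadj Q * L * Q"
  proof -
    have "cadj V * A * V = cadj V * (V * (T * (cadj V * V)))"
      unfolding AVT using Vc Tc cVc by (simp add: as mc)
    also have "\<dots> = T" using Tc VV1 canc(1)[of "T * (cadj V * V)"] Vc cVc by simp
    finally have 1: "cadj V * A * V = T" .
    have "cadj Q * L * Q = cadj V * (q * (L * (q * V)))"
      unfolding cQ unfolding Q_def using Vc cVc qc Lc by (simp add: as mc)
    also have "\<dots> = cadj V * A * V"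
      unfolding A_def using Vc cVc qc Lc by (simp add: as mc)
    finally show ?thesis using 1 by simp
  qed
  have Tentry: "T $$ (i, k) = (\<Sum>l<N. cnj (Q $$ (l, i)) * complex_of_real (mu l) * Q $$ (l, k))"
    if i: "i < N" and k: "k < N" for i k
  proof -
    have cQL: "cadj Q * L \<in> carrier_mat N N" using cadj_carrier[OF Qc] Lc by (rule mult_carrier_mat)
    have "T $$ (i, k) = (\<Sum>l<N. (cadj Q * L) $$ (i, l) * Q $$ (l, k))"
      unfolding TQ by (rule mult_entry[OF cQL Qc i k])
    also have "\<dots> = (\<Sum>l<N. cnj (Q $$ (l, i)) * complex_of_real (mu l) * Q $$ (l, k))"
    proof (intro sum.cong refl)
      fix l assume "l \<in> {..<N}"
      hence l: "l < N" by simp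
      have "(cadj Q * L) $$ (i, l) = cadj Q $$ (i, l) * L $$ (l, l)"
        by (rule mult_diag_right[OF Lc Ld cadj_carrier[OF Qc] i l])
      thus "(cadj Q * L) $$ (i, l) * Q $$ (l, k) = cnj (Q $$ (l, i)) * complex_of_real (mu l) * Q $$ (l, k)"
        using Lii[OF l] Qc i l by simp
    qed
    finally show ?thesis .
  qed
  define lam where "lam i = (\<Sum>l<N. mu l * (cmod (Q $$ (l, i)))\<^sup>2)" for i
  have Tii: "T $$ (i, i) = complex_of_real (lam i)" if i: "i < N" for i
  proof -
    have "T $$ (i, i) = (\<Sum>l<N. complex_of_real (mu l * (cmod (Q $$ (l, i)))\<^sup>2))"
      unfolding Tentry[OF i i]
    proof (intro sum.cong refl)
      fix l
      have "cnj (Q $$ (l, i)) * complex_of_real (mu l) * Q $$ (l, i) = complex_of_real (mu l) * (Q $$ (l, i) * cnj (Q $$ (l, i)))"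
        by (simp only: mult_ac)
      also have "\<dots> = complex_of_real (mu l * (cmod (Q $$ (l, i)))\<^sup>2)" by (simp only: mcnj of_real_mult)
      finally show "cnj (Q $$ (l, i)) * complex_of_real (mu l) * Q $$ (l, i) = complex_of_real (mu l * (cmod (Q $$ (l, i)))\<^sup>2)" .
    qed
    thus ?thesis unfolding lam_def by (simp only: of_real_sum)
  qed
  have lam0: "lam i \<ge> 0" for i unfolding lam_def using mu0 by (intro sum_nonneg) auto
  have VT: "V * T = A * V"
  proof -
    have "A * V = V * (T * (cadj V * V))" unfolding AVT using Vc Tc cVc by (simp add: as mc)
    thus ?thesis using VV1 Tc by simp
  qed
  have qA: "q * A = A"
  proof -
    have "q * A = (q * q) * (L * q)" unfolding A_def using qc Lc by (simp add: as mc)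
    thus ?thesis unfolding qq A_def using qc Lc by (simp add: as mc)
  qed
  have QT: "Q * T = V * T"
  proof -
    have "Q * T = q * (V * T)" unfolding Q_def by (rule as[OF qc Vc Tc])
    also have "\<dots> = q * (A * V)" unfolding VT ..
    also have "\<dots> = q * A * V" by (rule as[symmetric, OF qc Ac Vc])
    finally show ?thesis unfolding qA VT .
  qed
  have QV: "Q $$ (j, i) = V $$ (j, i)" if j: "j < N" and i: "i < N" and l: "lam i \<noteq> 0" for i j
  proof -
    have "Q $$ (j, i) * T $$ (i, i) = V $$ (j, i) * T $$ (i, i)"
      using mult_diag_right[OF Tc Td Qc j i] mult_diag_right[OF Tc Td Vc j i] QT by auto
    thus ?thesis using Tii[OF i] l by simp
  qed
  define w where "w i j = (cmod (V $$ (j, i)))\<^sup>2" for i j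
  have w0: "w i j \<ge> 0" for i j unfolding w_def by simp
  have wrow: "(\<Sum>i<N. w i j) = 1" if j: "j < N" for j
  proof -
    have "(V * cadj V) $$ (j, j) = (\<Sum>i<N. V $$ (j, i) * cadj V $$ (i, j))" by (rule mult_entry[OF Vc cVc j j])
    also have "\<dots> = (\<Sum>i<N. complex_of_real (w i j))"
      unfolding w_def using Vc j by (intro sum.cong refl) (simp add: mcnj)
    finally have "complex_of_real (\<Sum>i<N. w i j) = 1" using VV2 j by (simp add: of_real_sum)
    thus ?thesis by (simp only: of_real_eq_1_iff)
  qed
  have wcol: "(\<Sum>j<N. w i j) = 1" if i: "i < N" for i
  proof -
    have "(cadj V * V) $$ (i, i) = (\<Sum>j<N. cadj V $$ (i, j) * V $$ (j, i))" by (rule mult_entry[OF cVc Vc i i])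
    also have "\<dots> = (\<Sum>j<N. complex_of_real (w i j))"
      unfolding w_def using Vc i by (intro sum.cong refl) (simp add: mcnj mult.commute)
    finally have "complex_of_real (\<Sum>j<N. w i j) = 1" using VV1 i by (simp add: of_real_sum)
    thus ?thesis by (simp only: of_real_eq_1_iff)
  qed
  have lamw: "lam i = (\<Sum>j<N. mu j * w i j)" if i: "i < N" and l: "lam i > 0" for i
  proof -
    have "lam i = (\<Sum>j<N. mu j * (cmod (Q $$ (j, i)))\<^sup>2)" unfolding lam_def ..
    also have "\<dots> = (\<Sum>j<N. mu j * w i j)" unfolding w_def using QV i l by (intro sum.cong refl) auto
    finally show ?thesis .
  qed
  have bes: "(\<Sum>i\<in>{i. i < N \<and> lam i > 0}. mu j * w i j / lam i) \<le> 1" if j: "j < N" for j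
  proof -
    define I where "I = {i. i < N \<and> lam i > 0}"
    define a where "a i l = complex_of_real (sqrt (mu l / lam i)) * V $$ (l, i)" for i l
    have orth: "(\<Sum>l<N. cnj (a i l) * a k l) = (if i = k then 1 else 0)" if i: "i \<in> I" and k: "k \<in> I" for i k
    proof -
      have li: "lam i > 0" "i < N" and lk: "lam k > 0" "k < N" using i k unfolding I_def by auto
      have "(\<Sum>l<N. cnj (a i l) * a k l) = (\<Sum>l<N. complex_of_real (1 / sqrt (lam i * lam k)) * (cnj (Q $$ (l, i)) * complex_of_real (mu l) * Q $$ (l, k)))"
      proof (intro sum.cong refl)
        fix l assume "l \<in> {..<N}"
        hence l: "l < N" by simp
        have sq: "sqrt (mu l / lam i) * sqrt (mu l / lam k) = 1 / sqrt (lam i * lam k) * mu l"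
          using mu0[OF l] li lk by (simp add: real_sqrt_mult[symmetric] real_sqrt_divide)
        have "cnj (a i l) * a k l = complex_of_real (sqrt (mu l / lam i) * sqrt (mu l / lam k)) * (cnj (V $$ (l, i)) * V $$ (l, k))"
          unfolding a_def by (simp add: mult_ac)
        also have "\<dots> = complex_of_real (1 / sqrt (lam i * lam k)) * (cnj (Q $$ (l, i)) * complex_of_real (mu l) * Q $$ (l, k))"
          unfolding sq using QV[OF l li(2)] QV[OF l lk(2)] li lk by (simp add: mult_ac)
        finally show "cnj (a i l) * a k l = complex_of_real (1 / sqrt (lam i * lam k)) * (cnj (Q $$ (l, i)) * complex_of_real (mu l) * Q $$ (l, k))" .
      qed
      also have "\<dots> = complex_of_real (1 / sqrt (lam i * lam k)) * T $$ (i, k)"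
        unfolding Tentry[OF li(2) lk(2)] by (simp only: sum_distrib_left)
      also have "\<dots> = (if i = k then 1 else 0)"
      proof (cases "i = k")
        case True
        have "sqrt (lam i * lam i) = lam i" using li by simp
        thus ?thesis using True Tii[OF li(2)] li by simp
      next
        case False thus ?thesis using Td Tc li lk unfolding diagonal_mat_def by simp
      qed
      finally show ?thesis .
    qed
    have "(\<Sum>i\<in>I. (cmod (a i j))\<^sup>2) \<le> 1" by (rule bessel[OF _ orth j]) (simp add: I_def)
    moreover have "(cmod (a i j))\<^sup>2 = mu j * w i j / lam i" if "i \<in> I" for i
    proof -
      have "lam i > 0" using that unfolding I_def by simp
      thus ?thesis unfolding a_def w_def using mu0[OF j]
        by (simp add: norm_mult power_mult_distrib)
    qed
    ultimately show ?thesis unfolding I_def by simp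
  qed
  have pl: "p = (\<Sum>i<N. lam i)"
  proof -
    have QQ: "Q * cadj Q = q"
    proof -
      have "Q * cadj Q = q * (V * (cadj V * q))" unfolding cQ unfolding Q_def using qc Vc cVc by (simp add: as mc)
      thus ?thesis using canc(2)[OF qc] qq by simp
    qed
    have qjj: "Re (q $$ (j, j)) = (\<Sum>i<N. (cmod (Q $$ (j, i)))\<^sup>2)" if j: "j < N" for j
    proof -
      have "(Q * cadj Q) $$ (j, j) = (\<Sum>i<N. Q $$ (j, i) * cadj Q $$ (i, j))" by (rule mult_entry[OF Qc cadj_carrier[OF Qc] j j])
      also have "\<dots> = (\<Sum>i<N. complex_of_real ((cmod (Q $$ (j, i)))\<^sup>2))"
        using Qc j by (intro sum.cong refl) (simp add: mcnj)
      finally show ?thesis using QQ by (simp add: of_real_sum)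
    qed
    have "p = (\<Sum>j<N. mu j * (\<Sum>i<N. (cmod (Q $$ (j, i)))\<^sup>2))" unfolding p_def using qjj by simp
    also have "\<dots> = (\<Sum>i<N. lam i)" unfolding lam_def sum_distrib_left by (rule sum.swap)
    finally show ?thesis .
  qed
  have vN: "vN_entropy A = (\<Sum>i<N. eta (lam i))"
    using vN_entropy_diag[OF Ac V Tc Td AVT] Tii by simp
  note cr = core_real[of N mu w lam, OF mu0 mu1 w0 wrow wcol lam0 lamw bes]
  show "vN_entropy (q * L * q) \<le> (\<Sum>j<N. eta (mu j)) + (1 - p)"
    using cr(1) vN pl unfolding A_def by simp
  show "(\<Sum>j<N. eta (mu j)) \<le> vN_entropy (q * L * q) + real N * eta ((1 - p) / real N)"
    using cr(2) vN pl unfolding A_def by simp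
  show "p \<le> 1" using cr(3) pl by simp
qed

lemma sum_take_mono: "m \<le> n \<Longrightarrow> sum_list (take m (xs :: nat list)) \<le> sum_list (take n xs)"
proof -
  assume "m \<le> n"
  then obtain k where "n = m + k" using le_Suc_ex by blast
  thus ?thesis by (simp add: take_add)
qed

lemma block_exists: "i < sum_list (ks :: nat list) \<Longrightarrow> \<exists>b<length ks. sum_list (take b ks) \<le> i \<and> i < sum_list (take (Suc b) ks)"
proof (induction ks arbitrary: i)
  case Nil thus ?case by auto
next
  case (Cons k ks)
  show ?case
  proof (cases "i < k")
    case True thus ?thesis by (intro exI[of _ 0]) auto
  next
    case False
    hence "i - k < sum_list ks" using Cons.prems by simp
    then obtain b where "b < length ks" "sum_list (take b ks) \<le> i - k" "i - k < sum_list (take (Suc b) ks)"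
      using Cons.IH by blast
    thus ?thesis using False by (intro exI[of _ "Suc b"]) auto
  qed
qed

lemma block_unique:
  assumes "sum_list (take b ks) \<le> (j::nat)" "j < sum_list (take (Suc b) ks)"
    and "sum_list (take b' ks) \<le> j" "j < sum_list (take (Suc b') ks)"
  shows "b = b'"
proof (rule ccontr)
  assume "b \<noteq> b'"
  hence "Suc b \<le> b' \<or> Suc b' \<le> b" by auto
  thus False
  proof
    assume "Suc b \<le> b'"
    from sum_take_mono[OF this, of ks] assms show False by simp
  next
    assume "Suc b' \<le> b"
    from sum_take_mono[OF this, of ks] assms show False by simp
  qed
qed

lemma same_block_sym: "same_block ks i j \<longleftrightarrow> same_block ks j i"
  unfolding same_block_def by auto

lemma same_block_refl: "i < sum_list ks \<Longrightarrow> same_block ks i i"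
  unfolding same_block_def using block_exists by blast

lemma same_block_trans: "same_block ks i j \<Longrightarrow> same_block ks j l \<Longrightarrow> same_block ks i l"
  unfolding same_block_def using block_unique by metis

fun allowed :: "nat list \<Rightarrow> nat \<Rightarrow> nat \<Rightarrow> nat \<Rightarrow> bool" where
  "allowed ks 0 i j = True"
| "allowed ks (Suc n) i j = (allowed ks n (i div sum_list ks) (j div sum_list ks) \<and>
     same_block ks (i mod sum_list ks) (j mod sum_list ks))"

lemma allowed_sym: "allowed ks n i j \<longleftrightarrow> allowed ks n j i"
  by (induction n arbitrary: i j) (auto simp: same_block_sym)

lemma allowed_refl: "sum_list ks > 0 \<Longrightarrow> allowed ks n i i"
  by (induction n arbitrary: i) (auto intro: same_block_refl)

lemma allowed_trans: "allowed ks n i j \<Longrightarrow> allowed ks n j l \<Longrightarrow> allowed ks n i l"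
  by (induction n arbitrary: i j l) (auto intro: same_block_trans)

definition Bset :: "nat list \<Rightarrow> nat \<Rightarrow> complex mat set" where
  "Bset ks n = {M \<in> carrier_mat (sum_list ks ^ n) (sum_list ks ^ n).
     \<forall>i < sum_list ks ^ n. \<forall>j < sum_list ks ^ n. \<not> allowed ks n i j \<longrightarrow> M $$ (i, j) = 0}"

lemma lin_span_sub:
  assumes "S \<subseteq> B" "0\<^sub>m n n \<in> B" "\<And>x y. x \<in> B \<Longrightarrow> y \<in> B \<Longrightarrow> x + y \<in> B"
    "\<And>x c. x \<in> B \<Longrightarrow> c \<cdot>\<^sub>m x \<in> B"
  shows "lin_span n S \<subseteq> B"
proof
  fix x assume "x \<in> lin_span n S"
  thus "x \<in> B" by (induction rule: lin_span.induct) (use assms in auto)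
qed

lemma Bset_zero: "0\<^sub>m (sum_list ks ^ n) (sum_list ks ^ n) \<in> Bset ks n"
  unfolding Bset_def by auto

lemma Bset_add: "x \<in> Bset ks n \<Longrightarrow> y \<in> Bset ks n \<Longrightarrow> x + y \<in> Bset ks n"
  unfolding Bset_def by auto

lemma Bset_smult: "x \<in> Bset ks n \<Longrightarrow> c \<cdot>\<^sub>m x \<in> Bset ks n"
  unfolding Bset_def by auto

lemma kron_carrier: "X \<in> carrier_mat n n \<Longrightarrow> a \<in> carrier_mat m m \<Longrightarrow> kron X a \<in> carrier_mat (n * m) (n * m)"
  unfolding kron_def by auto

lemma kron_index: "X \<in> carrier_mat n n \<Longrightarrow> a \<in> carrier_mat m m \<Longrightarrow> i < n * m \<Longrightarrow> j < n * m \<Longrightarrow>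
  kron X a $$ (i, j) = X $$ (i div m, j div m) * a $$ (i mod m, j mod m)"
  unfolding kron_def by auto

lemma Apow_sub_Bset: "Apow ks n \<subseteq> Bset ks n"
proof (induction n)
  case 0
  have "lin_span 1 {1\<^sub>m 1} \<subseteq> Bset ks 0"
    by (rule lin_span_sub) (auto simp: Bset_def)
  thus ?case by simp
next
  case (Suc n)
  let ?d = "sum_list ks"
  have "{kron X a | X a. X \<in> Apow ks n \<and> a \<in> blk_alg ks} \<subseteq> Bset ks (Suc n)"
  proof safe
    fix X a assume X: "X \<in> Apow ks n" and a: "a \<in> blk_alg ks"
    have XB: "X \<in> Bset ks n" using X Suc by auto
    have Xc: "X \<in> carrier_mat (?d ^ n) (?d ^ n)" using XB unfolding Bset_def by auto
    have ac: "a \<in> carrier_mat ?d ?d" using a unfolding blk_alg_def by auto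
    have dd: "?d ^ n * ?d = ?d ^ Suc n" by (simp add: mult.commute)
    show "kron X a \<in> Bset ks (Suc n)" unfolding Bset_def
    proof (intro CollectI conjI allI impI)
      show "kron X a \<in> carrier_mat (?d ^ Suc n) (?d ^ Suc n)" using kron_carrier[OF Xc ac] dd by simp
      fix i j assume i: "i < ?d ^ Suc n" and j: "j < ?d ^ Suc n" and na: "\<not> allowed ks (Suc n) i j"
      have i': "i < ?d ^ n * ?d" and j': "j < ?d ^ n * ?d" using i j dd by (simp_all only:)
      have d0: "?d > 0"
      proof (rule ccontr)
        assume "\<not> ?d > 0"
        hence "?d = 0" by simp
        hence "?d ^ Suc n = 0" by (simp only: power_Suc mult_zero_left)
        thus False using i by (simp only: less_nat_zero_code)
      qed
      have id: "i div ?d < ?d ^ n" "j div ?d < ?d ^ n" using i' j' by (auto simp: less_mult_imp_div_less)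
      have im: "i mod ?d < ?d" "j mod ?d < ?d" using d0 by auto
      show "kron X a $$ (i, j) = 0"
      proof (cases "allowed ks n (i div ?d) (j div ?d)")
        case True
        hence "\<not> same_block ks (i mod ?d) (j mod ?d)" using na by simp
        hence "a $$ (i mod ?d, j mod ?d) = 0" using a im unfolding blk_alg_def by auto
        thus ?thesis using kron_index[OF Xc ac i' j'] by simp
      next
        case False
        hence "X $$ (i div ?d, j div ?d) = 0" using XB id unfolding Bset_def by auto
        thus ?thesis using kron_index[OF Xc ac i' j'] by simp
      qed
    qed
  qed
  thus ?case using Bset_zero Bset_add Bset_smult by (simp only: Apow.simps) (rule lin_span_sub)
qed

definition munit :: "nat \<Rightarrow> nat \<Rightarrow> nat \<Rightarrow> complex mat" where
  "munit N i j = mat N N (\<lambda>(a, b). if a = i \<and> b = j then 1 else 0)"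

lemma munit_carrier[simp]: "munit N i j \<in> carrier_mat N N" unfolding munit_def by simp

lemma munit_dims[simp]: "dim_row (munit N i j) = N" "dim_col (munit N i j) = N"
  unfolding munit_def by auto

lemma munit_index: "a < N \<Longrightarrow> b < N \<Longrightarrow> munit N i j $$ (a, b) = (if a = i \<and> b = j then 1 else 0)"
  unfolding munit_def by simp

lemma Apow_span: "\<exists>S. Apow ks n = lin_span (sum_list ks ^ n) S"
  by (cases n) auto

lemma Apow_zero: "0\<^sub>m (sum_list ks ^ n) (sum_list ks ^ n) \<in> Apow ks n"
  using Apow_span[of ks n] lin_span.zero by metis

lemma Apow_add: "x \<in> Apow ks n \<Longrightarrow> y \<in> Apow ks n \<Longrightarrow> x + y \<in> Apow ks n"
  using Apow_span[of ks n] lin_span.add by metis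

lemma Apow_smult: "x \<in> Apow ks n \<Longrightarrow> c \<cdot>\<^sub>m x \<in> Apow ks n"
  using Apow_span[of ks n] lin_span.smult by metis

lemma div_mod_eq_iff: "(d::nat) > 0 \<Longrightarrow> (a = i) \<longleftrightarrow> (a div d = i div d \<and> a mod d = i mod d)"
  by (metis div_mult_mod_eq)

lemma munit_kron:
  assumes d: "(d::nat) > 0" and i: "i < d ^ Suc n" and j: "j < d ^ Suc n"
  shows "kron (munit (d ^ n) (i div d) (j div d)) (munit d (i mod d) (j mod d)) = munit (d ^ Suc n) i j"
proof (rule eq_matI)
  have dd: "d ^ n * d = d ^ Suc n" by (simp add: mult.commute)
  show "dim_row (kron (munit (d ^ n) (i div d) (j div d)) (munit d (i mod d) (j mod d))) = dim_row (munit (d ^ Suc n) i j)"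
    "dim_col (kron (munit (d ^ n) (i div d) (j div d)) (munit d (i mod d) (j mod d))) = dim_col (munit (d ^ Suc n) i j)"
    unfolding kron_def munit_def using dd by auto
  fix a b assume a: "a < dim_row (munit (d ^ Suc n) i j)" and b: "b < dim_col (munit (d ^ Suc n) i j)"
  hence "a < d ^ Suc n" "b < d ^ Suc n" by simp_all
  hence a': "a < d ^ n * d" and b': "b < d ^ n * d" using dd by (simp_all only:)
  have ad: "a div d < d ^ n" "b div d < d ^ n" using a' b' by (auto simp: less_mult_imp_div_less)
  have am: "a mod d < d" "b mod d < d" using d by auto
  have "kron (munit (d ^ n) (i div d) (j div d)) (munit d (i mod d) (j mod d)) $$ (a, b)
     = munit (d ^ n) (i div d) (j div d) $$ (a div d, b div d) * munit d (i mod d) (j mod d) $$ (a mod d, b mod d)"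
    by (rule kron_index[OF munit_carrier munit_carrier a' b'])
  also have "\<dots> = (if a = i \<and> b = j then 1 else 0)"
    using ad am div_mod_eq_iff[OF d, of a i] div_mod_eq_iff[OF d, of b j] by (auto simp: munit_index)
  also have "\<dots> = munit (d ^ Suc n) i j $$ (a, b)" using a b unfolding munit_def by simp
  finally show "kron (munit (d ^ n) (i div d) (j div d)) (munit d (i mod d) (j mod d)) $$ (a, b) = munit (d ^ Suc n) i j $$ (a, b)" .
qed

lemma munit_Apow:
  assumes d: "sum_list ks > 0"
  shows "i < sum_list ks ^ n \<Longrightarrow> j < sum_list ks ^ n \<Longrightarrow> allowed ks n i j \<Longrightarrow> munit (sum_list ks ^ n) i j \<in> Apow ks n"
proof (induction n arbitrary: i j)
  case 0
  hence "i = 0" "j = 0" by auto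
  moreover have "munit 1 0 0 = 1\<^sub>m 1" unfolding munit_def by (rule eq_matI) auto
  ultimately show ?case by (simp add: lin_span.gen)
next
  case (Suc n)
  let ?d = "sum_list ks"
  have dd: "?d ^ n * ?d = ?d ^ Suc n" by (simp add: mult.commute)
  have i': "i < ?d ^ n * ?d" and j': "j < ?d ^ n * ?d" using Suc.prems dd by (simp_all only:)
  have ad: "i div ?d < ?d ^ n" "j div ?d < ?d ^ n" using i' j' by (auto simp: less_mult_imp_div_less)
  have am: "i mod ?d < ?d" "j mod ?d < ?d" using d by auto
  have X: "munit (?d ^ n) (i div ?d) (j div ?d) \<in> Apow ks n" using Suc ad by simp
  have a: "munit ?d (i mod ?d) (j mod ?d) \<in> blk_alg ks"
    unfolding blk_alg_def using Suc.prems am by (auto simp: munit_index)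
  have "kron (munit (?d ^ n) (i div ?d) (j div ?d)) (munit ?d (i mod ?d) (j mod ?d)) \<in> Apow ks (Suc n)"
    using X a by (auto intro!: lin_span.gen)
  thus ?case using munit_kron[OF d Suc.prems(1,2)] by simp
qed

lemma Bset_induct:
  assumes M: "M \<in> Bset ks n"
    and P0: "P (0\<^sub>m (sum_list ks ^ n) (sum_list ks ^ n))"
    and Pstep: "\<And>X i j c. X \<in> Bset ks n \<Longrightarrow> P X \<Longrightarrow> i < sum_list ks ^ n \<Longrightarrow> j < sum_list ks ^ n \<Longrightarrow>
        allowed ks n i j \<Longrightarrow> P (X + c \<cdot>\<^sub>m munit (sum_list ks ^ n) i j)"
  shows "P M"
proof -
  let ?N = "sum_list ks ^ n"
  have main: "\<forall>M \<in> Bset ks n. (\<forall>i<?N. \<forall>j<?N. (i, j) \<notin> S \<longrightarrow> M $$ (i, j) = 0) \<longrightarrow> P M"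
    if "finite S" for S :: "(nat \<times> nat) set"
    using that
  proof (induction S rule: finite_induct)
    case empty
    show ?case
    proof safe
      fix M assume M: "M \<in> Bset ks n" and z: "\<forall>i<?N. \<forall>j<?N. (i, j) \<notin> {} \<longrightarrow> M $$ (i, j) = 0"
      have "M = 0\<^sub>m ?N ?N" using M z unfolding Bset_def by (intro eq_matI) auto
      thus "P M" using P0 by simp
    qed
  next
    case (insert x S)
    obtain i0 j0 where x: "x = (i0, j0)" by (cases x)
    show ?case
    proof safe
      fix M assume M: "M \<in> Bset ks n" and z: "\<forall>i<?N. \<forall>j<?N. (i, j) \<notin> insert x S \<longrightarrow> M $$ (i, j) = 0"
      have Mc: "M \<in> carrier_mat ?N ?N" using M unfolding Bset_def by auto
      define M' where "M' = mat ?N ?N (\<lambda>(i, j). if (i, j) = (i0, j0) then 0 else M $$ (i, j))"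
      have M'B: "M' \<in> Bset ks n" using M unfolding Bset_def M'_def by auto
      have "P M'" using insert.IH M'B z x unfolding M'_def by auto
      show "P M"
      proof (cases "i0 < ?N \<and> j0 < ?N \<and> allowed ks n i0 j0")
        case True
        have "M = M' + M $$ (i0, j0) \<cdot>\<^sub>m munit ?N i0 j0"
          using Mc unfolding M'_def by (intro eq_matI) (auto simp: munit_index)
        thus ?thesis using Pstep[OF M'B \<open>P M'\<close>] True by metis
      next
        case False
        have "M = M'" using Mc M False unfolding M'_def Bset_def by (intro eq_matI) auto
        thus ?thesis using \<open>P M'\<close> by simp
      qed
    qed
  qed
  have "finite ({..<?N} \<times> {..<?N})" by simp
  from main[OF this] M show ?thesis by auto
qed

lemma Apow_eq: assumes d: "sum_list ks > 0" shows "Apow ks n = Bset ks n"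
proof
  show "Apow ks n \<subseteq> Bset ks n" by (rule Apow_sub_Bset)
  show "Bset ks n \<subseteq> Apow ks n"
  proof
    fix M assume "M \<in> Bset ks n"
    thus "M \<in> Apow ks n"
      by (rule Bset_induct) (auto intro!: Apow_add Apow_smult munit_Apow[OF d] Apow_zero)
  qed
qed

lemma mtrace_mult:
  assumes D: "D \<in> carrier_mat N N" and M: "M \<in> carrier_mat N N"
  shows "mtrace (D * M) = (\<Sum>i<N. \<Sum>j<N. D $$ (i, j) * M $$ (j, i))"
proof -
  have "mtrace (D * M) = (\<Sum>i<N. (D * M) $$ (i, i))" unfolding mtrace_def using D by simp
  also have "\<dots> = (\<Sum>i<N. \<Sum>j<N. D $$ (i, j) * M $$ (j, i))"
    by (intro sum.cong refl) (rule mult_entry[OF D M], auto)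
  finally show ?thesis .
qed

lemma mtrace_munit:
  assumes D: "D \<in> carrier_mat N N" and i: "i < N" and j: "j < N"
  shows "mtrace (D * munit N i j) = D $$ (j, i)"
proof -
  have "mtrace (D * munit N i j) = (\<Sum>a<N. \<Sum>b<N. D $$ (a, b) * munit N i j $$ (b, a))"
    by (rule mtrace_mult[OF D munit_carrier])
  also have "\<dots> = (\<Sum>a<N. \<Sum>b<N. if b = i then (if a = j then D $$ (a, b) else 0) else 0)"
    by (intro sum.cong refl) (auto simp: munit_index)
  also have "\<dots> = D $$ (j, i)" using i j by simp
  finally show ?thesis .
qed

lemma double_delta:
  assumes i: "i < N" and j: "j < N"
  shows "(\<Sum>a<N. \<Sum>b<N. (if a = i then u else 0) * (D $$ (a, b) :: complex) * (if b = j then v else 0)) = u * D $$ (i, j) * v"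
proof -
  have "(\<Sum>a<N. \<Sum>b<N. (if a = i then u else 0) * D $$ (a, b) * (if b = j then v else 0))
      = (\<Sum>a<N. \<Sum>b<N. if b = j then (if a = i then u * D $$ (a, b) * v else 0) else 0)"
    by (intro sum.cong refl) auto
  also have "\<dots> = u * D $$ (i, j) * v" using i j by simp
  finally show ?thesis .
qed

definition qf :: "complex mat \<Rightarrow> (nat \<Rightarrow> complex) \<Rightarrow> complex" where
  "qf D x = (\<Sum>i<dim_row D. \<Sum>j<dim_row D. cnj (x i) * D $$ (i, j) * x j)"

lemma qf_two:
  assumes D: "D \<in> carrier_mat N N" and i: "i < N" and j: "j < N"
  shows "qf D (\<lambda>a. (if a = i then u else 0) + (if a = j then v else 0)) =
    cnj u * D $$ (i, i) * u + cnj u * D $$ (i, j) * v + cnj v * D $$ (j, i) * u + cnj v * D $$ (j, j) * v"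
proof -
  let ?x = "\<lambda>a. (if a = i then u else 0) + (if a = j then v else 0)"
  have "qf D ?x = (\<Sum>a<N. \<Sum>b<N.
      (if a = i then cnj u else 0) * D $$ (a, b) * (if b = i then u else 0) +
      (if a = i then cnj u else 0) * D $$ (a, b) * (if b = j then v else 0) +
      (if a = j then cnj v else 0) * D $$ (a, b) * (if b = i then u else 0) +
      (if a = j then cnj v else 0) * D $$ (a, b) * (if b = j then v else 0))"
    unfolding qf_def using D by (intro sum.cong refl) (auto simp: algebra_simps)
  also have "\<dots> = cnj u * D $$ (i, i) * u + cnj u * D $$ (i, j) * v + cnj v * D $$ (j, i) * u + cnj v * D $$ (j, j) * v"
    by (simp only: sum.distrib double_delta[OF i i] double_delta[OF i j] double_delta[OF j i] double_delta[OF j j])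
  finally show ?thesis .
qed

lemma herm_qf:
  assumes D: "D \<in> carrier_mat N N" and im: "\<And>x. Im (qf D x) = 0"
  shows "cadj D = D"
proof (rule eq_matI)
  have diag: "Im (D $$ (i, i)) = 0" if i: "i < N" for i
  proof -
    have "qf D (\<lambda>a. (if a = i then 1 else 0) + (if a = i then 0 else 0)) = 4 * D $$ (i, i) - 3 * D $$ (i,i)"
      using qf_two[OF D i i, of 1 0] by simp
    thus ?thesis using im[of "\<lambda>a. (if a = i then 1 else 0) + (if a = i then 0 else 0)"] by simp
  qed
  fix i j assume "i < dim_row D" "j < dim_col D"
  hence i: "i < N" and j: "j < N" using D by auto
  have e1: "Im (D $$ (i, j) + D $$ (j, i)) = 0"
    using im[of "\<lambda>a. (if a = i then 1 else 0) + (if a = j then 1 else 0)"] qf_two[OF D i j, of 1 1] diag[OF i] diag[OF j]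
    by simp
  have e2: "Re (D $$ (i, j)) - Re (D $$ (j, i)) = 0"
    using im[of "\<lambda>a. (if a = i then 1 else 0) + (if a = j then \<i> else 0)"] qf_two[OF D i j, of 1 "\<i>"] diag[OF i] diag[OF j]
    by simp
  have "D $$ (j, i) = cnj (D $$ (i, j))" using e1 e2 by (simp add: complex_eq_iff)
  thus "cadj D $$ (i, j) = D $$ (i, j)" using i j D by simp
qed (use D in auto)

definition D0 :: "nat list \<Rightarrow> (nat \<Rightarrow> complex mat \<Rightarrow> complex) \<Rightarrow> nat \<Rightarrow> complex mat" where
  "D0 ks phi n = mat (sum_list ks ^ n) (sum_list ks ^ n)
     (\<lambda>(i, j). if allowed ks n i j then phi n (munit (sum_list ks ^ n) j i) else 0)"

definition rep :: "nat list \<Rightarrow> nat \<Rightarrow> nat \<Rightarrow> nat" where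
  "rep ks n i = (LEAST r. allowed ks n i r)"

context
  fixes ks :: "nat list" and phi :: "nat \<Rightarrow> complex mat \<Rightarrow> complex"
  assumes st: "stationary_state ks phi" and d: "sum_list ks > 0"
begin

lemma ph_add: "X \<in> Apow ks n \<Longrightarrow> Y \<in> Apow ks n \<Longrightarrow> phi n (X + Y) = phi n X + phi n Y"
  using st unfolding stationary_state_def by blast

lemma ph_smult: "X \<in> Apow ks n \<Longrightarrow> phi n (c \<cdot>\<^sub>m X) = c * phi n X"
  using st unfolding stationary_state_def by blast

lemma ph_pos: "X \<in> Apow ks n \<Longrightarrow> Im (phi n (cadj X * X)) = 0 \<and> Re (phi n (cadj X * X)) \<ge> 0"
  using st unfolding stationary_state_def by blast

lemma ph_one: "phi n (1\<^sub>m (sum_list ks ^ n)) = 1"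
  using st unfolding stationary_state_def by blast

lemma D0_carrier: "D0 ks phi n \<in> carrier_mat (sum_list ks ^ n) (sum_list ks ^ n)"
  unfolding D0_def by simp

lemma D0_Bset: "D0 ks phi n \<in> Bset ks n"
  unfolding D0_def Bset_def by auto

lemma D0_rep: "a \<in> Apow ks n \<Longrightarrow> phi n a = mtrace (D0 ks phi n * a)"
proof -
  let ?N = "sum_list ks ^ n"
  let ?D = "D0 ks phi n"
  assume "a \<in> Apow ks n"
  hence "a \<in> Bset ks n" using Apow_eq[OF d] by simp
  thus ?thesis
  proof (rule Bset_induct)
    have z: "0\<^sub>m ?N ?N \<in> Apow ks n" by (rule Apow_zero)
    have e: "phi n (0 \<cdot>\<^sub>m 0\<^sub>m ?N ?N) = 0 * phi n (0\<^sub>m ?N ?N)" by (rule ph_smult[OF z])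
    have "(0::complex) \<cdot>\<^sub>m 0\<^sub>m ?N ?N = 0\<^sub>m ?N ?N" by simp
    hence "phi n (0\<^sub>m ?N ?N) = 0" using e by simp
    thus "phi n (0\<^sub>m ?N ?N) = mtrace (?D * 0\<^sub>m ?N ?N)"
      using mtrace_mult[OF D0_carrier zero_carrier_mat] by simp
  next
    fix X i j c assume X: "X \<in> Bset ks n" and IH: "phi n X = mtrace (?D * X)"
      and i: "i < ?N" and j: "j < ?N" and al: "allowed ks n i j"
    have XA: "X \<in> Apow ks n" using X Apow_eq[OF d] by simp
    have Xc: "X \<in> carrier_mat ?N ?N" using X unfolding Bset_def by auto
    have EA: "munit ?N i j \<in> Apow ks n" by (rule munit_Apow[OF d i j al])
    have "phi n (X + c \<cdot>\<^sub>m munit ?N i j) = phi n X + c * phi n (munit ?N i j)"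
      using ph_add[OF XA Apow_smult[OF EA]] ph_smult[OF EA] by simp
    also have "phi n (munit ?N i j) = ?D $$ (j, i)"
      using i j al allowed_sym unfolding D0_def by auto
    also have "\<dots> = mtrace (?D * munit ?N i j)" by (rule mtrace_munit[OF D0_carrier i j, symmetric])
    also have "phi n X + c * mtrace (?D * munit ?N i j) = mtrace (?D * (X + c \<cdot>\<^sub>m munit ?N i j))"
    proof -
      have "mtrace (?D * (X + c \<cdot>\<^sub>m munit ?N i j)) =
          (\<Sum>a<?N. \<Sum>b<?N. ?D $$ (a, b) * (X + c \<cdot>\<^sub>m munit ?N i j) $$ (b, a))"
        by (rule mtrace_mult[OF D0_carrier]) (use Xc in simp)
      also have "\<dots> = (\<Sum>a<?N. \<Sum>b<?N. ?D $$ (a, b) * X $$ (b, a)) + c * (\<Sum>a<?N. \<Sum>b<?N. ?D $$ (a, b) * munit ?N i j $$ (b, a))"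
        unfolding sum_distrib_left sum.distrib[symmetric]
        by (intro sum.cong refl) (use Xc in \<open>auto simp: algebra_simps\<close>)
      finally show ?thesis
        using IH mtrace_mult[OF D0_carrier Xc] mtrace_mult[OF D0_carrier munit_carrier] by simp
    qed
    finally show "phi n (X + c \<cdot>\<^sub>m munit ?N i j) = mtrace (?D * (X + c \<cdot>\<^sub>m munit ?N i j))" .
  qed
qed

lemma density_D0: "density ks phi n = D0 ks phi n"
  unfolding density_def
proof (rule the_equality)
  show "D0 ks phi n \<in> Apow ks n \<and> (\<forall>a\<in>Apow ks n. phi n a = mtrace (D0 ks phi n * a))"
    using D0_Bset Apow_eq[OF d] D0_rep by auto
next
  let ?N = "sum_list ks ^ n"
  fix D assume D: "D \<in> Apow ks n \<and> (\<forall>a\<in>Apow ks n. phi n a = mtrace (D * a))"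
  have DB: "D \<in> Bset ks n" using D Apow_eq[OF d] by auto
  have Dc: "D \<in> carrier_mat ?N ?N" using DB unfolding Bset_def by auto
  show "D = D0 ks phi n"
  proof (rule eq_matI)
    fix i j assume "i < dim_row (D0 ks phi n)" "j < dim_col (D0 ks phi n)"
    hence i: "i < ?N" and j: "j < ?N" unfolding D0_def by auto
    show "D $$ (i, j) = D0 ks phi n $$ (i, j)"
    proof (cases "allowed ks n i j")
      case True
      hence "munit ?N j i \<in> Apow ks n" using munit_Apow[OF d j i] allowed_sym by auto
      hence "phi n (munit ?N j i) = D $$ (i, j)" using D mtrace_munit[OF Dc j i] by auto
      thus ?thesis using True i j unfolding D0_def by simp
    next
      case False thus ?thesis using DB i j unfolding Bset_def D0_def by auto
    qed
  qed (use Dc in \<open>auto simp: D0_def\<close>)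
qed

lemma D0_trace: "mtrace (D0 ks phi n) = 1"
proof -
  let ?N = "sum_list ks ^ n"
  have "1\<^sub>m ?N \<in> Bset ks n" unfolding Bset_def using allowed_refl[OF d] by auto
  hence "1\<^sub>m ?N \<in> Apow ks n" using Apow_eq[OF d] by simp
  hence "phi n (1\<^sub>m ?N) = mtrace (D0 ks phi n * 1\<^sub>m ?N)" by (rule D0_rep)
  moreover have "D0 ks phi n * 1\<^sub>m ?N = D0 ks phi n" by (rule right_mult_one_mat[OF D0_carrier])
  ultimately show ?thesis using ph_one by simp
qed

lemma rep_allowed: "allowed ks n i (rep ks n i)"
  unfolding rep_def by (rule LeastI[of _ i]) (rule allowed_refl[OF d])

lemma rep_le: "rep ks n i \<le> i"
  unfolding rep_def by (rule Least_le) (rule allowed_refl[OF d])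

lemma rep_eq_iff: "rep ks n i = rep ks n j \<longleftrightarrow> allowed ks n i j"
proof
  assume "rep ks n i = rep ks n j"
  thus "allowed ks n i j" using rep_allowed[of n i] rep_allowed[of n j] allowed_sym allowed_trans by metis
next
  assume a: "allowed ks n i j"
  have "\<And>r. allowed ks n i r \<longleftrightarrow> allowed ks n j r" using a allowed_sym allowed_trans by metis
  hence "allowed ks n i = allowed ks n j" by (intro ext) simp
  thus "rep ks n i = rep ks n j" unfolding rep_def by simp
qed

lemma D0_qf: "Im (qf (D0 ks phi n) x) = 0 \<and> Re (qf (D0 ks phi n) x) \<ge> 0"
proof -
  let ?N = "sum_list ks ^ n"
  let ?D = "D0 ks phi n"
  define Y where "Y r = mat ?N ?N (\<lambda>(a, b). if a = r \<and> rep ks n b = r then cnj (x b) else 0)" for r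
  have Yc: "Y r \<in> carrier_mat ?N ?N" for r unfolding Y_def by simp
  have YB: "Y r \<in> Bset ks n" for r
    unfolding Bset_def Y_def using rep_allowed allowed_sym by auto
  have YA: "Y r \<in> Apow ks n" for r using YB Apow_eq[OF d] by simp
  have YY: "(cadj (Y r) * Y r) $$ (j, i) = (if rep ks n j = r then x j else 0) * (if rep ks n i = r then cnj (x i) else 0)"
    if r: "r < ?N" and i: "i < ?N" and j: "j < ?N" for r i j
  proof -
    have "(cadj (Y r) * Y r) $$ (j, i) = (\<Sum>a<?N. cadj (Y r) $$ (j, a) * Y r $$ (a, i))"
      by (rule mult_entry[OF cadj_carrier[OF Yc] Yc j i])
    also have "\<dots> = (\<Sum>a<?N. if a = r then (if rep ks n j = r then x j else 0) * (if rep ks n i = r then cnj (x i) else 0) else 0)"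
      using i j Yc by (intro sum.cong refl) (auto simp: Y_def)
    also have "\<dots> = (if rep ks n j = r then x j else 0) * (if rep ks n i = r then cnj (x i) else 0)"
      using r by simp
    finally show ?thesis .
  qed
  have trm: "phi n (cadj (Y r) * Y r) = (\<Sum>i<?N. \<Sum>j<?N. ?D $$ (i, j) * ((if rep ks n j = r then x j else 0) * (if rep ks n i = r then cnj (x i) else 0)))"
    if r: "r < ?N" for r
  proof -
    have YYc: "cadj (Y r) * Y r \<in> carrier_mat ?N ?N" using cadj_carrier[OF Yc] Yc by (rule mult_carrier_mat)
    have "cadj (Y r) * Y r \<in> Apow ks n"
    proof -
      have "cadj (Y r) * Y r \<in> Bset ks n"
        unfolding Bset_def using YY[OF r] YYc rep_eq_iff allowed_sym by auto
      thus ?thesis using Apow_eq[OF d] by simp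
    qed
    hence "phi n (cadj (Y r) * Y r) = mtrace (?D * (cadj (Y r) * Y r))" by (rule D0_rep)
    also have "\<dots> = (\<Sum>i<?N. \<Sum>j<?N. ?D $$ (i, j) * (cadj (Y r) * Y r) $$ (j, i))"
      by (rule mtrace_mult[OF D0_carrier YYc])
    also have "\<dots> = (\<Sum>i<?N. \<Sum>j<?N. ?D $$ (i, j) * ((if rep ks n j = r then x j else 0) * (if rep ks n i = r then cnj (x i) else 0)))"
      using YY[OF r] by (intro sum.cong refl) auto
    finally show ?thesis .
  qed
  have "(\<Sum>r<?N. phi n (cadj (Y r) * Y r)) = (\<Sum>r<?N. \<Sum>i<?N. \<Sum>j<?N. ?D $$ (i, j) * ((if rep ks n j = r then x j else 0) * (if rep ks n i = r then cnj (x i) else 0)))"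
    using trm by simp
  also have "\<dots> = (\<Sum>i<?N. \<Sum>j<?N. \<Sum>r<?N. ?D $$ (i, j) * ((if rep ks n j = r then x j else 0) * (if rep ks n i = r then cnj (x i) else 0)))"
    by (subst sum.swap, rule sum.cong[OF refl], rule sum.swap)
  also have "\<dots> = (\<Sum>i<?N. \<Sum>j<?N. cnj (x i) * ?D $$ (i, j) * x j)"
  proof (intro sum.cong refl)
    fix i j assume i: "i \<in> {..<?N}" and j: "j \<in> {..<?N}"
    have ri: "rep ks n i < ?N" using rep_le[of n i] i by simp
    show "(\<Sum>r<?N. ?D $$ (i, j) * ((if rep ks n j = r then x j else 0) * (if rep ks n i = r then cnj (x i) else 0))) = cnj (x i) * ?D $$ (i, j) * x j"
    proof (cases "rep ks n i = rep ks n j")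
      case True
      have "(\<Sum>r<?N. ?D $$ (i, j) * ((if rep ks n j = r then x j else 0) * (if rep ks n i = r then cnj (x i) else 0)))
          = (\<Sum>r<?N. if r = rep ks n i then ?D $$ (i, j) * (x j * cnj (x i)) else 0)"
        using True by (intro sum.cong refl) auto
      thus ?thesis using ri by simp
    next
      case False
      hence "\<not> allowed ks n i j" using rep_eq_iff by simp
      hence "?D $$ (i, j) = 0" using i j unfolding D0_def by simp
      thus ?thesis by simp
    qed
  qed
  also have "\<dots> = qf ?D x" unfolding qf_def D0_def by simp
  finally have eq: "qf ?D x = (\<Sum>r<?N. phi n (cadj (Y r) * Y r))" by simp
  have "Im (qf ?D x) = (\<Sum>r<?N. Im (phi n (cadj (Y r) * Y r)))" unfolding eq by (simp add: Im_sum)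
  also have "\<dots> = 0" using ph_pos[OF YA] by simp
  finally have "Im (qf ?D x) = 0" .
  moreover have "Re (qf ?D x) = (\<Sum>r<?N. Re (phi n (cadj (Y r) * Y r)))" unfolding eq by (simp add: Re_sum)
  moreover have "\<dots> \<ge> 0" using ph_pos[OF YA] by (intro sum_nonneg) auto
  ultimately show ?thesis by simp
qed

lemma D0_herm: "cadj (D0 ks phi n) = D0 ks phi n"
  by (rule herm_qf[OF D0_carrier]) (use D0_qf in auto)

end

lemma mtrace_comm:
  assumes A: "A \<in> carrier_mat n m" and B: "B \<in> carrier_mat m n"
  shows "mtrace (A * B) = mtrace (B * A)"
proof -
  have "mtrace (A * B) = (\<Sum>i<n. (A * B) $$ (i, i))" unfolding mtrace_def using A by simp
  also have "\<dots> = (\<Sum>i<n. \<Sum>k<m. A $$ (i, k) * B $$ (k, i))"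
    by (intro sum.cong refl) (rule mult_entry[OF A B], auto)
  also have "\<dots> = (\<Sum>k<m. \<Sum>i<n. B $$ (k, i) * A $$ (i, k))"
    by (subst sum.swap) (simp add: mult.commute)
  also have "\<dots> = (\<Sum>k<m. (B * A) $$ (k, k))"
    by (intro sum.cong refl) (rule mult_entry[OF B A, symmetric], auto)
  also have "\<dots> = mtrace (B * A)" unfolding mtrace_def using B by simp
  finally show ?thesis .
qed

lemma vN_sim:
  assumes U: "unitary n U" and X: "X \<in> carrier_mat n n"
  shows "vN_entropy (U * X * cadj U) = vN_entropy X"
proof -
  have Uc: "U \<in> carrier_mat n n" using U unitary_def by auto
  have "similar_mat_wit (U * X * cadj U) X U (cadj U)"
    unfolding similar_mat_wit_def using U X Uc unfolding unitary_def by (auto simp: Let_def)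
  hence "similar_mat (U * X * cadj U) X" unfolding similar_mat_def by blast
  hence "char_poly (U * X * cadj U) = char_poly X" by (rule char_poly_similar)
  thus ?thesis unfolding vN_entropy_def by simp
qed

lemma step_n:
  fixes ks :: "nat list" and phi :: "nat \<Rightarrow> complex mat \<Rightarrow> complex" and q :: "complex mat"
  assumes st: "stationary_state ks phi" and d: "sum_list ks > 0"
    and qA: "q \<in> Apow ks n" and qp: "orth_proj q"
  defines "p \<equiv> Re (phi n q)"
  shows "vN_entropy (q * density ks phi n * q) \<le> vN_entropy (density ks phi n) + (1 - p)"
    and "vN_entropy (density ks phi n) \<le> vN_entropy (q * density ks phi n * q) + (1 - p) * (real n * ln (sum_list ks)) + eta (1 - p)"
    and "p \<le> 1" and "0 \<le> p"
proof -
  define N where "N = sum_list ks ^ n"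
  define D where "D = density ks phi n"
  have DD0: "D = D0 ks phi n" unfolding D_def by (rule density_D0[OF st d])
  have Dc: "D \<in> carrier_mat N N" unfolding DD0 N_def by (rule D0_carrier[OF st d])
  have Dh: "cadj D = D" unfolding DD0 by (rule D0_herm[OF st d])
  have Dqf: "Im (qf D x) = 0 \<and> Re (qf D x) \<ge> 0" for x unfolding DD0 by (rule D0_qf[OF st d])
  have Dtr: "mtrace D = 1" unfolding DD0 by (rule D0_trace[OF st d])
  have Drep: "phi n a = mtrace (D * a)" if "a \<in> Apow ks n" for a unfolding DD0 by (rule D0_rep[OF st d that])
  have qc: "q \<in> carrier_mat N N" using qA Apow_eq[OF d] unfolding Bset_def N_def by auto
  have qq: "q * q = q" and qh: "cadj q = q" using qp unfolding orth_proj_def by auto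
  have p0: "0 \<le> p"
  proof -
    have "phi n (cadj q * q) = phi n q" using qq qh by simp
    thus ?thesis using ph_pos[OF st d qA] unfolding p_def by simp
  qed
  obtain U T where U: "unitary N U" and Tc: "T \<in> carrier_mat N N" and Td: "diagonal_mat T"
    and DUT: "D = U * T * cadj U"
    using spectral[OF Dc Dh] by blast
  have Uc: "U \<in> carrier_mat N N" and UU1: "cadj U * U = 1\<^sub>m N" and UU2: "U * cadj U = 1\<^sub>m N"
    using U unfolding unitary_def by auto
  have cUc: "cadj U \<in> carrier_mat N N" using Uc by simp
  have mc: "\<And>X Y. X \<in> carrier_mat N N \<Longrightarrow> Y \<in> carrier_mat N N \<Longrightarrow> X * Y \<in> carrier_mat N N" by auto
  have as: "\<And>X Y Z. X \<in> carrier_mat N N \<Longrightarrow> Y \<in> carrier_mat N N \<Longrightarrow> Z \<in> carrier_mat N N \<Longrightarrow> X * Y * Z = X * (Y * Z)"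
    by (rule assoc_mult_mat)
  have canc: "\<And>X. X \<in> carrier_mat N N \<Longrightarrow> cadj U * (U * X) = X"
    "\<And>X. X \<in> carrier_mat N N \<Longrightarrow> U * (cadj U * X) = X"
    using unitary_cancel[OF U] by auto
  have TD: "T = cadj U * D * U"
  proof -
    have "cadj U * D * U = cadj U * (U * (T * (cadj U * U)))" unfolding DUT using Uc Tc cUc by (simp add: as mc)
    thus ?thesis using canc(1)[of "T * (cadj U * U)"] UU1 Tc Uc cUc by simp
  qed
  define mu where "mu j = Re (T $$ (j, j))" for j
  have Tjj: "T $$ (j, j) = qf D (\<lambda>i. U $$ (i, j))" if j: "j < N" for j
  proof -
    have cUD: "cadj U * D \<in> carrier_mat N N" using cUc Dc by (rule mult_carrier_mat)
    have "T $$ (j, j) = (\<Sum>b<N. (cadj U * D) $$ (j, b) * U $$ (b, j))"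
      unfolding TD by (rule mult_entry[OF cUD Uc j j])
    also have "\<dots> = (\<Sum>b<N. (\<Sum>a<N. cnj (U $$ (a, j)) * D $$ (a, b)) * U $$ (b, j))"
      using j Uc by (intro sum.cong refl) (simp add: mult_entry[OF cUc Dc])
    also have "\<dots> = (\<Sum>a<N. \<Sum>b<N. cnj (U $$ (a, j)) * D $$ (a, b) * U $$ (b, j))"
      by (simp add: sum_distrib_right) (rule sum.swap)
    also have "\<dots> = qf D (\<lambda>i. U $$ (i, j))" unfolding qf_def using Dc by simp
    finally show ?thesis .
  qed
  have mu0: "mu j \<ge> 0" if "j < N" for j unfolding mu_def using Tjj[OF that] Dqf by simp
  have Tjj': "T $$ (j, j) = complex_of_real (mu j)" if "j < N" for j
    unfolding mu_def using Tjj[OF that] Dqf by (simp add: complex_eq_iff)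
  define L where "L = mat N N (\<lambda>(i, j). if i = j then complex_of_real (mu i) else 0)"
  have TL: "T = L"
    unfolding L_def using Tc Td Tjj' unfolding diagonal_mat_def by (intro eq_matI) auto
  have mu1: "(\<Sum>j<N. mu j) = 1"
  proof -
    have cUD: "cadj U * D \<in> carrier_mat N N" using cUc Dc by (rule mult_carrier_mat)
    have "mtrace T = mtrace (U * (cadj U * D))" unfolding TD by (rule mtrace_comm[OF cUD Uc])
    also have "\<dots> = 1" using canc(2)[OF Dc] Dtr by simp
    finally have a: "mtrace T = 1" .
    have b: "mtrace T = complex_of_real (\<Sum>j<N. mu j)"
      unfolding mtrace_def using Tc Tjj' by (simp add: of_real_sum)
    have "complex_of_real (\<Sum>j<N. mu j) = 1" by (simp only: b[symmetric] a)
    thus ?thesis by (simp only: of_real_eq_1_iff)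
  qed
  have vD: "vN_entropy D = (\<Sum>j<N. eta (mu j))"
    using vN_entropy_diag[OF Dc U Tc Td DUT] unfolding mu_def by simp
  define q' where "q' = cadj U * q * U"
  have q'c: "q' \<in> carrier_mat N N" unfolding q'_def using cUc qc Uc by (intro mc)
  have q'q': "q' * q' = q'"
  proof -
    have "q' * q' = cadj U * (q * (U * (cadj U * (q * U))))" unfolding q'_def using cUc qc Uc by (simp add: as mc)
    also have "\<dots> = cadj U * (q * q * U)" using canc(2)[of "q * U"] qc Uc as[OF qc qc Uc] by (simp add: mc)
    finally show ?thesis unfolding qq q'_def using cUc qc Uc by (simp add: as mc)
  qed
  have q'h: "cadj q' = q'"
  proof -
    have cqU: "cadj U * q \<in> carrier_mat N N" using cUc qc by (rule mult_carrier_mat)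
    have "cadj q' = cadj U * cadj (cadj U * q)" unfolding q'_def by (rule cadj_mult[OF cqU Uc])
    also have "cadj (cadj U * q) = cadj q * U" using cadj_mult[OF cUc qc] by simp
    finally show ?thesis unfolding q'_def qh using cUc qc Uc by (simp add: as mc)
  qed
  have qDq: "q * D * q = U * (q' * L * q') * cadj U"
  proof -
    have "U * (q' * L * q') * cadj U = U * (cadj U * (q * (U * (T * (cadj U * (q * (U * cadj U)))))))"
      unfolding q'_def TL[symmetric] using cUc qc Uc Tc by (simp add: as mc)
    also have "\<dots> = q * (U * (T * (cadj U * q)))" using canc(2) UU2 qc Uc Tc cUc by (simp add: mc)
    also have "\<dots> = q * D * q" unfolding DUT using cUc qc Uc Tc by (simp add: as mc)
    finally show ?thesis by simp
  qed
  have q'Lc: "q' * L * q' \<in> carrier_mat N N" using q'c TL Tc by simp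
  have vqDq: "vN_entropy (q * D * q) = vN_entropy (q' * L * q')"
    unfolding qDq by (rule vN_sim[OF U q'Lc])
  have pp: "p = (\<Sum>j<N. mu j * Re (q' $$ (j, j)))"
  proof -
    have "phi n q = mtrace (D * q)" by (rule Drep[OF qA])
    also have "D * q = U * (T * cadj U * q)" unfolding DUT using Uc Tc cUc qc by (simp add: as mc)
    also have "mtrace (U * (T * cadj U * q)) = mtrace (T * cadj U * q * U)"
      by (rule mtrace_comm[OF Uc]) (use Tc cUc qc in simp)
    also have "T * cadj U * q * U = T * q'" unfolding q'_def using Tc cUc qc Uc by (simp add: as mc)
    also have "mtrace (T * q') = (\<Sum>j<N. \<Sum>k<N. T $$ (j, k) * q' $$ (k, j))" by (rule mtrace_mult[OF Tc q'c])
    also have "\<dots> = (\<Sum>j<N. complex_of_real (mu j) * q' $$ (j, j))"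
    proof (intro sum.cong refl)
      fix j assume j: "j \<in> {..<N}"
      have "(\<Sum>k<N. T $$ (j, k) * q' $$ (k, j)) = (\<Sum>k<N. if k = j then T $$ (j, j) * q' $$ (j, j) else 0)"
        using Td Tc j unfolding diagonal_mat_def by (intro sum.cong refl) auto
      thus "(\<Sum>k<N. T $$ (j, k) * q' $$ (k, j)) = complex_of_real (mu j) * q' $$ (j, j)" using j Tjj' by simp
    qed
    finally show ?thesis unfolding p_def by (simp add: Re_sum)
  qed
  note cr = core[OF mu0 mu1 q'c q'q' q'h, folded L_def, folded pp]
  have N0: "N > 0" unfolding N_def using d by simp
  have "p \<le> 1" by (rule cr(3))
  have lnN: "ln (real N) = real n * ln (sum_list ks)" unfolding N_def by (simp add: ln_realpow)
  show "vN_entropy (q * density ks phi n * q) \<le> vN_entropy (density ks phi n) + (1 - p)"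
    using cr(1) vqDq vD unfolding D_def by simp
  have "real N * eta ((1 - p) / real N) = (1 - p) * ln (real N) + eta (1 - p)"
    by (rule eta_scale) (use N0 \<open>p \<le> 1\<close> in auto)
  thus "vN_entropy (density ks phi n) \<le> vN_entropy (q * density ks phi n * q) + (1 - p) * (real n * ln (sum_list ks)) + eta (1 - p)"
    using cr(2) vqDq vD lnN unfolding D_def by simp
  show "p \<le> 1" by fact
  show "0 \<le> p" by (rule p0)
qed

lemma sum_list_pos: "ks \<noteq> [] \<Longrightarrow> \<forall>k\<in>set ks. k > 0 \<Longrightarrow> sum_list ks > (0::nat)"
  by (cases ks) auto

theorem lemma5:
  fixes ks :: "nat list" and phi :: "nat \<Rightarrow> complex mat \<Rightarrow> complex"
    and q :: "nat \<Rightarrow> complex mat" and s :: real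
  assumes "ks \<noteq> []" and "\<forall>k\<in>set ks. k > 0"
    and "stationary_state ks phi"
    and "(\<lambda>n. vN_entropy (density ks phi n) / real n) \<longlonglongrightarrow> s"
    and "\<forall>n. q n \<in> Apow ks n \<and> orth_proj (q n)"
    and "(\<lambda>n. phi n (q n)) \<longlonglongrightarrow> 1"
  shows "(\<lambda>n. vN_entropy (q n * density ks phi n * q n) / real n) \<longlonglongrightarrow> s"
proof -
  have d: "sum_list ks > 0" using sum_list_pos assms(1,2) by blast
  note st = assms(3)
  define p where "p n = Re (phi n (q n))" for n
  define L where "L = ln (real (sum_list ks))"
  have L0: "L \<ge> 0" unfolding L_def using d by simp
  have pl: "p \<longlonglongrightarrow> 1" unfolding p_def using tendsto_Re[OF assms(6)] by simp
  define a where "a n = vN_entropy (q n * density ks phi n * q n) / real n" for n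
  define b where "b n = vN_entropy (density ks phi n) / real n" for n
  define e where "e n = (1 - p n) * (1 + L) + sqrt (1 - p n)" for n
  have bnd: "b n - e n \<le> a n \<and> a n \<le> b n + e n" if n: "n \<ge> 1" for n
  proof -
    note sn = step_n[OF st d conjunct1[OF spec[OF assms(5)]] conjunct2[OF spec[OF assms(5)]], of n, folded p_def]
    define x where "x = vN_entropy (q n * density ks phi n * q n)"
    define y where "y = vN_entropy (density ks phi n)"
    define t where "t = 1 - p n"
    have t0: "t \<ge> 0" and t1: "t \<le> 1" unfolding t_def using sn(3,4) by auto
    have h1: "x \<le> y + t" using sn(1) unfolding x_def y_def t_def by simp
    have h2: "y \<le> x + t * (real n * L) + eta t" using sn(2) unfolding x_def y_def t_def L_def by simp
    have et: "0 \<le> eta t" "eta t \<le> sqrt t" using eta_nonneg[OF t0 t1] eta_le_sqrt[OF t0] by auto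
    have np: "real n \<ge> 1" using n by simp
    have "x / real n \<le> (y + t) / real n" using h1 np by (intro divide_right_mono) auto
    also have "\<dots> = y / real n + t / real n" by (simp add: add_divide_distrib)
    also have "t / real n \<le> t" using t0 np by (simp add: divide_le_eq mult_le_cancel_left1)
    also have "t \<le> e n" unfolding e_def t_def[symmetric] using t0 L0 by (simp add: mult_le_cancel_left1 add_increasing2)
    finally have A1: "a n \<le> b n + e n" unfolding a_def b_def x_def y_def by simp
    have "y / real n \<le> (x + t * (real n * L) + eta t) / real n" using h2 np by (intro divide_right_mono) auto
    also have "\<dots> = x / real n + t * L + eta t / real n" using np by (simp add: field_simps)
    also have "eta t / real n \<le> eta t" using et np by (simp add: divide_le_eq mult_le_cancel_left1)
    also have "eta t \<le> sqrt t" by (rule et(2))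
    finally have A2': "y / real n \<le> x / real n + t * L + sqrt t" by simp
    have "t * L + sqrt t \<le> e n" unfolding e_def t_def[symmetric] using t0 by (simp add: algebra_simps)
    hence A2: "b n - e n \<le> a n" using A2' unfolding a_def b_def x_def y_def by simp
    show ?thesis using A1 A2 by simp
  qed
  have el: "e \<longlonglongrightarrow> 0"
  proof -
    have "(\<lambda>n. (1 - p n) * (1 + L) + sqrt (1 - p n)) \<longlonglongrightarrow> (1 - 1) * (1 + L) + sqrt (1 - 1)"
      by (intro tendsto_intros pl)
    thus ?thesis unfolding e_def by simp
  qed
  have bl: "b \<longlonglongrightarrow> s" unfolding b_def using assms(4) .
  have "(\<lambda>n. b n - e n) \<longlonglongrightarrow> s - 0" by (intro tendsto_intros bl el)
  moreover have "(\<lambda>n. b n + e n) \<longlonglongrightarrow> s + 0" by (intro tendsto_intros bl el)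
  moreover have "eventually (\<lambda>n. b n - e n \<le> a n) sequentially"
    using bnd by (intro eventually_sequentiallyI[of 1]) auto
  moreover have "eventually (\<lambda>n. a n \<le> b n + e n) sequentially"
    using bnd by (intro eventually_sequentiallyI[of 1]) auto
  ultimately have "a \<longlonglongrightarrow> s" by (intro tendsto_sandwich[of "\<lambda>n. b n - e n" a sequentially "\<lambda>n. b n + e n"]) auto
  thus ?thesis unfolding a_def .
qed

end
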